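(* Let $\mathcal U$ and $\mathcal V$ be universal Martin-Löf tests. Then $\mathsf{RD}_{\mathcal V}\not\le_{\mathrm{sW}}\mathsf{LAY}_{\mathcal U}$.
   Context: Cantor space $2^\omega$, Lebesgue measure $\lambda$. A Martin-Löf (ML) test is a sequence $(\mathcal V_i)_{i\in\omega}$ of open subsets of $2^\omega$ such that $\{\langle i,\sigma\rangle:[\sigma]\subseteq\mathcal V_i\}$ is c.e. and $\lambda(\mathcal V_i)\le 2^{-i}$; it is universal if $\bigcap_i\mathcal V'_i\subseteq\bigcap_i\mathcal V_i$ for every ML-test $\mathcal V'$. $\mathrm{MLR}$ is the set of Martin-Löf random sequences ($=2^\omega\setminus\bigcap_i\mathcal U_i$ for any universal $\mathcal U$); for $X\in\mathrm{MLR}$, $\mathrm{rd}_{\mathcal U}(X)=\min\{i:X\notin\mathcal U_i\}$. A representation of a set $X$ is a surjective partial map $\delta_X:\subseteq\omega^\omega\to X$. A realizer of a multi-valued partial function $f:\subseteq X\rightrightarrows Y$ is a partial $\Gamma:\subseteq\omega^\omega\to\omega^\omega$ with $\delta_Y(\Gamma(p))\in f(\delta_X(p))$ for all $p\in\mathrm{dom}(f\circ\delta_X)$. $f\le_{\mathrm{sW}} g$ if there are Turing functionals $\Phi,\Psi$ such that $\Psi\circ\Gamma\circ\Phi$ realizes $f$ for every realizer $\Gamma$ of $g$. $\mathrm{MLR}$ is represented by the identity on $\mathrm{MLR}\subseteq\omega^\omega$, $\omega$ by $\chi_{\{n\}}\mapsto n$. $\mathsf{LAY}_{\mathcal U}\colon\mathrm{MLR}\rightrightarrows\omega$,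 $\mathsf{LAY}_{\mathcal U}(X)=\{i:X\notin\mathcal U_i\}$; $\mathsf{RD}_{\mathcal V}\colon\mathrm{MLR}\to\omega$, $\mathsf{RD}_{\mathcal V}(X)=\mathrm{rd}_{\mathcal V}(X)$. *)

theory Defs
  imports "HOL-Probability.Probability" "HOL-Library.Nat_Bijection"
begin

datatype recf = Zero | Succ | Proj nat | Orc | Comp recf "recf list"
  | PrimRec recf recf | Mu recf

inductive ev :: "(nat \<Rightarrow> nat) \<Rightarrow> recf \<Rightarrow> nat list \<Rightarrow> nat \<Rightarrow> bool" for \<alpha> where
  ev_Zero: "ev \<alpha> Zero xs 0"
| ev_Succ: "ev \<alpha> Succ (x # xs) (Suc x)"
| ev_Proj: "i < length xs \<Longrightarrow> ev \<alpha> (Proj i) xs (xs ! i)"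
| ev_Orc: "ev \<alpha> Orc (x # xs) (\<alpha> x)"
| ev_Comp: "list_all2 (\<lambda>g y. ev \<alpha> g xs y) gs ys \<Longrightarrow> ev \<alpha> f ys z \<Longrightarrow> ev \<alpha> (Comp f gs) xs z"
| ev_Pr0: "ev \<alpha> g xs y \<Longrightarrow> ev \<alpha> (PrimRec g h) (0 # xs) y"
| ev_PrS: "ev \<alpha> (PrimRec g h) (n # xs) y \<Longrightarrow> ev \<alpha> h (n # y # xs) z
           \<Longrightarrow> ev \<alpha> (PrimRec g h) (Suc n # xs) z"
| ev_Mu: "ev \<alpha> f (n # xs) 0 \<Longrightarrow> (\<forall>m<n. \<exists>y. 0 < y \<and> ev \<alpha> f (m # xs) y)
           \<Longrightarrow> ev \<alpha> (Mu f) xs n"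

text \<open>Computably enumerable sets of naturals: domains of partial recursive
  functions (computations with the trivial oracle, which is itself computable).\<close>
definition ce :: "nat set \<Rightarrow> bool" where
  "ce A \<longleftrightarrow> (\<exists>e. A = {x. \<exists>y. ev (\<lambda>_. 0) e [x] y})"

definition tfun :: "recf \<Rightarrow> (nat \<Rightarrow> nat) \<Rightarrow> (nat \<Rightarrow> nat) option" where
  "tfun e p = (if \<forall>n. \<exists>y. ev p e [n] y then Some (\<lambda>n. THE y. ev p e [n] y) else None)"

definition cyl :: "bool list \<Rightarrow> (nat \<Rightarrow> bool) set" where
  "cyl \<sigma> = {X. \<forall>i<length \<sigma>. X i = \<sigma> ! i}"

definition str_code :: "bool list \<Rightarrow> nat" where
  "str_code \<sigma> = list_encode (map of_bool \<sigma>)"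

definition cantor_lambda :: "(nat \<Rightarrow> bool) measure" where
  "cantor_lambda = PiM UNIV (\<lambda>_::nat. measure_pmf (bernoulli_pmf (1/2)))"

definition cantor_open :: "(nat \<Rightarrow> bool) set \<Rightarrow> bool" where
  "cantor_open V \<longleftrightarrow> V = \<Union>{cyl \<sigma> | \<sigma>. cyl \<sigma> \<subseteq> V}"

definition MLtest :: "(nat \<Rightarrow> (nat \<Rightarrow> bool) set) \<Rightarrow> bool" where
  "MLtest V \<longleftrightarrow> (\<forall>i. cantor_open (V i))
     \<and> ce {prod_encode (i, str_code \<sigma>) | i \<sigma>. cyl \<sigma> \<subseteq> V i}
     \<and> (\<forall>i. emeasure cantor_lambda (V i) \<le> ennreal ((1/2) ^ i))"

definition universal_MLtest :: "(nat \<Rightarrow> (nat \<Rightarrow> bool) set) \<Rightarrow> bool" where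
  "universal_MLtest U \<longleftrightarrow> MLtest U \<and>
     (\<forall>V. MLtest V \<longrightarrow> (\<Inter>i. V i) \<subseteq> (\<Inter>i. U i))"

definition MLR :: "(nat \<Rightarrow> bool) set" where
  "MLR = {X. \<forall>V. MLtest V \<longrightarrow> X \<notin> (\<Inter>i. V i)}"

definition LAY :: "(nat \<Rightarrow> (nat \<Rightarrow> bool) set) \<Rightarrow> (nat \<Rightarrow> bool) \<Rightarrow> nat set" where
  "LAY U X = {i. X \<notin> U i}"

definition RD :: "(nat \<Rightarrow> (nat \<Rightarrow> bool) set) \<Rightarrow> (nat \<Rightarrow> bool) \<Rightarrow> nat set" where
  "RD V X = {LEAST i. X \<notin> V i}"

text \<open>MLR represented by the identity on MLR viewed as a subset of Baire space.\<close>
definition delta_MLR :: "(nat \<Rightarrow> nat) \<Rightarrow> (nat \<Rightarrow> bool) option" where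
  "delta_MLR p = (if (\<forall>n. p n \<le> 1) \<and> (\<lambda>n. p n = 1) \<in> MLR
                  then Some (\<lambda>n. p n = 1) else None)"

definition chi :: "nat \<Rightarrow> nat \<Rightarrow> nat" where
  "chi n = (\<lambda>k. if k = n then 1 else 0)"

definition delta_nat :: "(nat \<Rightarrow> nat) \<Rightarrow> nat option" where
  "delta_nat p = (if \<exists>n. p = chi n then Some (THE n. p = chi n) else None)"

definition realizes ::
  "((nat \<Rightarrow> nat) \<Rightarrow> 'a option) \<Rightarrow> ((nat \<Rightarrow> nat) \<Rightarrow> 'b option) \<Rightarrow> ('a \<Rightarrow> 'b set)
    \<Rightarrow> ((nat \<Rightarrow> nat) \<Rightarrow> (nat \<Rightarrow> nat) option) \<Rightarrow> bool" where
  "realizes dX dY f \<Gamma> \<longleftrightarrow>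
     (\<forall>p x. dX p = Some x \<longrightarrow> (\<exists>q y. \<Gamma> p = Some q \<and> dY q = Some y \<and> y \<in> f x))"

definition sW_le ::
  "((nat \<Rightarrow> nat) \<Rightarrow> 'a option) \<Rightarrow> ((nat \<Rightarrow> nat) \<Rightarrow> 'b option) \<Rightarrow> ('a \<Rightarrow> 'b set)
   \<Rightarrow> ((nat \<Rightarrow> nat) \<Rightarrow> 'c option) \<Rightarrow> ((nat \<Rightarrow> nat) \<Rightarrow> 'd option) \<Rightarrow> ('c \<Rightarrow> 'd set) \<Rightarrow> bool" where
  "sW_le dX dY f dZ dW g \<longleftrightarrow>
     (\<exists>\<Phi> \<Psi>. \<forall>\<Gamma>. realizes dZ dW g \<Gamma> \<longrightarrow>
        realizes dX dY f (\<lambda>p. Option.bind (tfun \<Phi> p) (\<lambda>q. Option.bind (\<Gamma> q) (tfun \<Psi>))))"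

end

theory Submission
  imports Defs
begin


inductive_cases evZeroE: "ev \<alpha> Zero xs y"
inductive_cases evSuccE: "ev \<alpha> Succ xs y"
inductive_cases evProjE: "ev \<alpha> (Proj i) xs y"
inductive_cases evOrcE: "ev \<alpha> Orc xs y"
inductive_cases evCompE: "ev \<alpha> (Comp f gs) xs y"
inductive_cases evPrE: "ev \<alpha> (PrimRec g h) xs y"
inductive_cases evMuE: "ev \<alpha> (Mu f) xs y"

fun mst :: "(nat list \<Rightarrow> nat option) \<Rightarrow> nat list \<Rightarrow> nat \<Rightarrow> nat" where
  "mst F xs 0 = 0"
| "mst F xs (Suc s) = (if mst F xs s = 0 then (case F (s # xs) of None \<Rightarrow> 1 | Some y \<Rightarrow> if y = 0 then s + 2 else 0) else mst F xs s)"

primrec run :: "(nat \<Rightarrow> nat) \<Rightarrow> nat \<Rightarrow> recf \<Rightarrow> nat list \<Rightarrow> nat option" where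
  "run \<alpha> t Zero xs = Some 0"
| "run \<alpha> t Succ xs = (case xs of [] \<Rightarrow> None | x # _ \<Rightarrow> Some (Suc x))"
| "run \<alpha> t (Proj i) xs = (if i < length xs then Some (xs ! i) else None)"
| "run \<alpha> t Orc xs = (case xs of [] \<Rightarrow> None | x # _ \<Rightarrow> Some (\<alpha> x))"
| "run \<alpha> t (Comp f gs) xs = (let ys = map (\<lambda>r. r xs) (map (run \<alpha> t) gs) in
      if None \<in> set ys then None else run \<alpha> t f (map the ys))"
| "run \<alpha> t (PrimRec g h) xs = (case xs of [] \<Rightarrow> None | m # xs' \<Rightarrow>
      rec_nat (run \<alpha> t g xs') (\<lambda>k r. case r of None \<Rightarrow> None | Some y \<Rightarrow> run \<alpha> t h (k # y # xs')) m)"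
| "run \<alpha> t (Mu f) xs = (let c = mst (run \<alpha> t f) xs t in if 2 \<le> c then Some (c - 2) else None)"

lemma mst_zero: "(\<forall>m<n. \<exists>y>0. F (m # xs) = Some y) \<Longrightarrow> s \<le> n \<Longrightarrow> mst F xs s = 0"
proof (induction s)
  case (Suc s)
  then obtain y where "y > 0" "F (s # xs) = Some y" by (meson Suc_le_lessD)
  then show ?case using Suc by simp
qed simp

lemma mst_found: "(\<forall>m<n. \<exists>y>0. F (m # xs) = Some y) \<Longrightarrow> F (n # xs) = Some 0 \<Longrightarrow> n < s \<Longrightarrow> mst F xs s = n + 2"
proof (induction s)
  case 0 then show ?case by simp
next
  case (Suc s)
  show ?case
  proof (cases "n < s")
    case True then show ?thesis using Suc by simp
  next
    case False then have "s = n" using Suc by simp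
    then show ?thesis using Suc mst_zero[of n F xs n] by simp
  qed
qed

lemma mst_sound: "2 \<le> mst F xs s \<Longrightarrow> \<exists>n. mst F xs s = n + 2 \<and> n < s \<and> F (n # xs) = Some 0 \<and> (\<forall>m<n. \<exists>y>0. F (m # xs) = Some y)"
proof (induction s)
  case 0 then show ?case by simp
next
  case (Suc s)
  show ?case
  proof (cases "mst F xs s = 0")
    case True
    then have ne: "\<forall>m<s. \<exists>y>0. F (m # xs) = Some y"
    proof (induction s)
      case 0 then show ?case by simp
    next
      case (Suc s)
      then have "mst F xs s = 0" by (auto split: if_splits option.splits)
      moreover have "\<exists>y>0. F (s # xs) = Some y" using Suc.prems \<open>mst F xs s = 0\<close>
        by (auto split: if_splits option.splits)
      ultimately show ?case using Suc.IH less_Suc_eq by auto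
    qed
    show ?thesis using Suc.prems True ne by (auto split: if_splits option.splits)
  next
    case False then show ?thesis using Suc by (auto simp: less_Suc_eq)
  qed
qed

lemma run_mono: "run \<alpha> t f xs = Some y \<Longrightarrow> t \<le> t' \<Longrightarrow> run \<alpha> t' f xs = Some y"
proof (induction f arbitrary: xs y)
  case (Comp f gs)
  let ?ys = "map (\<lambda>g. run \<alpha> t g xs) gs"
  have nn: "None \<notin> set ?ys" and r: "run \<alpha> t f (map the ?ys) = Some y"
    using Comp.prems by (auto simp: Let_def o_def split: if_splits)
  have eq: "map (\<lambda>g. run \<alpha> t' g xs) gs = ?ys"
  proof (rule map_cong[OF refl])
    fix g assume g: "g \<in> set gs"
    then obtain z where "run \<alpha> t g xs = Some z" using nn by (cases "run \<alpha> t g xs") force+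
    then show "run \<alpha> t' g xs = run \<alpha> t g xs" using Comp.IH(2)[OF g] Comp.prems(2) by simp
  qed
  show ?case using nn r Comp.IH(1)[OF r Comp.prems(2)] eq by (simp add: Let_def o_def cong: map_cong)
next
  case (PrimRec g h)
  then obtain m xs' where xs: "xs = m # xs'" by (cases xs) auto
  have "rec_nat (run \<alpha> t g xs') (\<lambda>k r. case r of None \<Rightarrow> None | Some y \<Rightarrow> run \<alpha> t h (k # y # xs')) m = Some y
     \<Longrightarrow> rec_nat (run \<alpha> t' g xs') (\<lambda>k r. case r of None \<Rightarrow> None | Some y \<Rightarrow> run \<alpha> t' h (k # y # xs')) m = Some y" for y
  proof (induction m arbitrary: y)
    case 0 then show ?case using PrimRec by simp
  next
    case (Suc m)
    then obtain z where z: "rec_nat (run \<alpha> t g xs') (\<lambda>k r. case r of None \<Rightarrow> None | Some y \<Rightarrow> run \<alpha> t h (k # y # xs')) m = Some z"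
      by (auto split: option.splits)
    show ?case using Suc.prems z Suc.IH[OF z] PrimRec.IH(2)[of "m # z # xs'"] PrimRec.prems(2) by simp
  qed
  then show ?case using PrimRec.prems xs by simp
next
  case (Mu f)
  let ?F = "run \<alpha> t f" and ?F' = "run \<alpha> t' f"
  have c: "2 \<le> mst ?F xs t" and yv: "y = mst ?F xs t - 2" using Mu.prems by (auto simp: Let_def split: if_splits)
  from mst_sound[OF c] obtain n where n: "mst ?F xs t = n + 2" "n < t" "?F (n # xs) = Some 0"
    "\<forall>m<n. \<exists>y>0. ?F (m # xs) = Some y" by blast
  have "\<forall>m<n. \<exists>y>0. ?F' (m # xs) = Some y" using n(4) Mu.IH Mu.prems(2) by blast
  moreover have "?F' (n # xs) = Some 0" using n(3) Mu.IH Mu.prems(2) by blast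
  ultimately have "mst ?F' xs t' = n + 2" using mst_found[of n ?F' xs t'] n(2) Mu.prems(2) by simp
  then show ?case using yv n(1) by (simp add: Let_def)
qed auto

lemma run_sound: "run \<alpha> t f xs = Some y \<Longrightarrow> ev \<alpha> f xs y"
proof (induction f arbitrary: xs y)
  case Zero then show ?case by (auto intro: ev.intros)
next
  case Succ then show ?case by (auto intro: ev.intros split: list.splits)
next
  case (Proj i) then show ?case by (auto intro: ev.intros split: if_splits)
next
  case Orc then show ?case by (auto intro: ev.intros split: list.splits)
next
  case (Comp f gs)
  let ?ys = "map (\<lambda>g. run \<alpha> t g xs) gs"
  have nn: "None \<notin> set ?ys" and r: "run \<alpha> t f (map the ?ys) = Some y"
    using Comp.prems by (auto simp: Let_def o_def split: if_splits)
  have "list_all2 (\<lambda>g y. ev \<alpha> g xs y) gs (map the ?ys)"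
  proof (rule list_all2_all_nthI)
    fix j assume j: "j < length gs"
    then have "run \<alpha> t (gs ! j) xs = Some (the (run \<alpha> t (gs!j) xs))" using nn
      by (metis (no_types, lifting) image_eqI nth_mem option.exhaust_sel set_map)
    then show "ev \<alpha> (gs ! j) xs (map the ?ys ! j)" using Comp.IH(2)[of "gs ! j"] j by simp
  qed simp
  then show ?case using Comp.IH(1)[OF r] by (rule ev_Comp)
next
  case (PrimRec g h)
  then obtain m xs' where xs: "xs = m # xs'" by (cases xs) auto
  have "rec_nat (run \<alpha> t g xs') (\<lambda>k r. case r of None \<Rightarrow> None | Some y \<Rightarrow> run \<alpha> t h (k # y # xs')) m = Some y
     \<Longrightarrow> ev \<alpha> (PrimRec g h) (m # xs') y" for y
  proof (induction m arbitrary: y)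
    case 0 then show ?case using PrimRec by (auto intro: ev.intros)
  next
    case (Suc m)
    then obtain z where z: "rec_nat (run \<alpha> t g xs') (\<lambda>k r. case r of None \<Rightarrow> None | Some y \<Rightarrow> run \<alpha> t h (k # y # xs')) m = Some z"
      by (auto split: option.splits)
    show ?case using Suc.prems z by (auto intro!: ev_PrS[OF Suc.IH[OF z]] PrimRec.IH(2))
  qed
  then show ?case using PrimRec.prems xs by simp
next
  case (Mu f)
  let ?F = "run \<alpha> t f"
  have c: "2 \<le> mst ?F xs t" and yv: "y = mst ?F xs t - 2" using Mu.prems by (auto simp: Let_def split: if_splits)
  from mst_sound[OF c] obtain n where n: "mst ?F xs t = n + 2" "n < t" "?F (n # xs) = Some 0"
    "\<forall>m<n. \<exists>y>0. ?F (m # xs) = Some y" by blast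
  have "ev \<alpha> (Mu f) xs n"
    by (rule ev_Mu) (use n(3,4) Mu.IH in blast)+
  then show ?case using yv n(1) by simp
qed

lemma run_list: "list_all2 (\<lambda>g y. \<exists>t. run \<alpha> t g xs = Some y) gs ys \<Longrightarrow>
   \<exists>T. \<forall>t\<ge>T. map (\<lambda>g. run \<alpha> t g xs) gs = map Some ys"
proof (induction rule: list_all2_induct)
  case Nil then show ?case by simp
next
  case (Cons g gs y ys)
  then obtain t0 T where "run \<alpha> t0 g xs = Some y" "\<forall>t\<ge>T. map (\<lambda>g. run \<alpha> t g xs) gs = map Some ys" by blast
  then show ?case by (intro exI[of _ "max t0 T"]) (auto intro: run_mono)
qed

lemma run_Mu_aux: "\<forall>m<n. \<exists>y>0. \<exists>t. run \<alpha> t f (m # xs) = Some y \<Longrightarrow>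
   \<exists>T. \<forall>t\<ge>T. \<forall>m<n. \<exists>y>0. run \<alpha> t f (m # xs) = Some y"
proof (induction n)
  case 0 then show ?case by simp
next
  case (Suc n)
  then obtain T where T: "\<forall>t\<ge>T. \<forall>m<n. \<exists>y>0. run \<alpha> t f (m # xs) = Some y" by auto
  obtain y t0 where "y > 0" "run \<alpha> t0 f (n # xs) = Some y" using Suc.prems by blast
  then show ?case using T by (intro exI[of _ "max t0 T"]) (auto simp: less_Suc_eq intro: run_mono)
qed

lemma run_complete: "ev \<alpha> f xs y \<Longrightarrow> \<exists>t. run \<alpha> t f xs = Some y"
proof (induction rule: ev.induct)
  case (ev_Comp xs gs ys f z)
  have "list_all2 (\<lambda>g y. \<exists>t. run \<alpha> t g xs = Some y) gs ys"
    using ev_Comp.IH(1) by (rule list_all2_mono) auto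
  from run_list[OF this] obtain T where T: "\<forall>t\<ge>T. map (\<lambda>g. run \<alpha> t g xs) gs = map Some ys" by blast
  obtain t0 where t0: "run \<alpha> t0 f ys = Some z" using ev_Comp.IH(2) by blast
  have "map (\<lambda>g. run \<alpha> (max t0 T) g xs) gs = map Some ys" using T by simp
  moreover have "run \<alpha> (max t0 T) f ys = Some z" using t0 run_mono[of \<alpha> t0 f ys z "max t0 T"] by simp
  ultimately show ?case by (intro exI[of _ "max t0 T"]) (simp add: Let_def o_def comp_def)
next
  case (ev_Pr0 g xs y h)
  then show ?case by auto
next
  case (ev_PrS g h n xs y z)
  then obtain t1 t2 where "run \<alpha> t1 (PrimRec g h) (n # xs) = Some y" "run \<alpha> t2 h (n # y # xs) = Some z" by blast
  then have "run \<alpha> (max t1 t2) (PrimRec g h) (n # xs) = Some y" "run \<alpha> (max t1 t2) h (n # y # xs) = Some z"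
    using run_mono[of \<alpha> t1 "PrimRec g h" "n # xs" y "max t1 t2"] run_mono[of \<alpha> t2 h "n # y # xs" z "max t1 t2"] by auto
  then show ?case by (intro exI[of _ "max t1 t2"]) simp
next
  case (ev_Mu f n xs)
  obtain T where T: "\<forall>t\<ge>T. \<forall>m<n. \<exists>y>0. run \<alpha> t f (m # xs) = Some y"
    using run_Mu_aux[of n \<alpha> f xs] ev_Mu.IH(2) by blast
  obtain t0 where t0: "run \<alpha> t0 f (n # xs) = Some 0" using ev_Mu.IH(1) by blast
  let ?t = "max (max t0 T) (Suc n)"
  have "mst (run \<alpha> ?t f) xs ?t = n + 2"
  proof (rule mst_found)
    show "\<forall>m<n. \<exists>y>0. run \<alpha> ?t f (m # xs) = Some y" using T by simp
    show "run \<alpha> ?t f (n # xs) = Some 0" using t0 run_mono[of \<alpha> t0 f "n # xs" 0 ?t] by simp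
  qed simp
  then show ?case by (intro exI[of _ ?t]) (simp add: Let_def)
next
  case (ev_Proj i xs) then show ?case by simp
qed simp_all

lemma ev_run: "ev \<alpha> f xs y \<longleftrightarrow> (\<exists>t. run \<alpha> t f xs = Some y)"
  using run_sound run_complete by blast

lemma ev_det: "ev \<alpha> f xs y \<Longrightarrow> ev \<alpha> f xs y' \<Longrightarrow> y = y'"
proof -
  assume "ev \<alpha> f xs y" "ev \<alpha> f xs y'"
  then obtain t t' where "run \<alpha> t f xs = Some y" "run \<alpha> t' f xs = Some y'" using run_complete by blast
  then have "run \<alpha> (max t t') f xs = Some y" "run \<alpha> (max t t') f xs = Some y'"
    using run_mono[of \<alpha> t f xs y "max t t'"] run_mono[of \<alpha> t' f xs y' "max t t'"] by auto
  then show ?thesis by simp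
qed



definition comp :: "recf \<Rightarrow> nat \<Rightarrow> (nat list \<Rightarrow> nat) \<Rightarrow> bool" where
  "comp F k fn \<longleftrightarrow> (\<forall>\<beta> xs. length xs = k \<longrightarrow> ev \<beta> F xs (fn xs))"

lemma compD: "comp F k fn \<Longrightarrow> length xs = k \<Longrightarrow> ev \<beta> F xs (fn xs)"
  unfolding comp_def by blast

lemma comp_ev_iff: "comp F k fn \<Longrightarrow> length xs = k \<Longrightarrow> ev \<beta> F xs y \<longleftrightarrow> y = fn xs"
  using compD ev_det by blast

lemma comp_Zero: "comp Zero k (\<lambda>_. 0)"
  unfolding comp_def by (auto intro: ev.intros)

lemma comp_Succ: "comp Succ (Suc k) (\<lambda>xs. Suc (xs ! 0))"
  unfolding comp_def by (auto simp: length_Suc_conv intro: ev.intros)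

lemma comp_Proj: "i < k \<Longrightarrow> comp (Proj i) k (\<lambda>xs. xs ! i)"
  unfolding comp_def by (auto intro: ev.intros)

lemma comp_Comp: "comp f (length gs) fn \<Longrightarrow> list_all2 (\<lambda>g gf. comp g k gf) gs gfs \<Longrightarrow>
   comp (Comp f gs) k (\<lambda>xs. fn (map (\<lambda>gf. gf xs) gfs))"
  unfolding comp_def
proof (intro allI impI)
  fix \<beta> :: "nat \<Rightarrow> nat" and xs :: "nat list" assume f: "\<forall>\<beta> xs. length xs = length gs \<longrightarrow> ev \<beta> f xs (fn xs)"
    and gs: "list_all2 (\<lambda>g gf. \<forall>\<beta> xs. length xs = k \<longrightarrow> ev \<beta> g xs (gf xs)) gs gfs"
    and l: "length xs = k"
  have "list_all2 (\<lambda>g y. ev \<beta> g xs y) gs (map (\<lambda>gf. gf xs) gfs)"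
    using gs l by (auto simp: list_all2_conv_all_nth)
  moreover have "ev \<beta> f (map (\<lambda>gf. gf xs) gfs) (fn (map (\<lambda>gf. gf xs) gfs))"
    using f gs by (simp add: list_all2_lengthD)
  ultimately show "ev \<beta> (Comp f gs) xs (fn (map (\<lambda>gf. gf xs) gfs))" by (rule ev_Comp)
qed

lemma comp_PrimRec: "comp g k gf \<Longrightarrow> comp h (Suc (Suc k)) hf \<Longrightarrow>
  comp (PrimRec g h) (Suc k) (\<lambda>xs. rec_nat (gf (tl xs)) (\<lambda>m r. hf (m # r # tl xs)) (hd xs))"
  unfolding comp_def
proof (intro allI impI)
  fix \<beta> :: "nat \<Rightarrow> nat" and xs :: "nat list" assume g: "\<forall>\<beta> xs. length xs = k \<longrightarrow> ev \<beta> g xs (gf xs)"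
    and h: "\<forall>\<beta> xs. length xs = Suc (Suc k) \<longrightarrow> ev \<beta> h xs (hf xs)" and l: "length xs = Suc k"
  then obtain m ys where xs: "xs = m # ys" and ly: "length ys = k" by (cases xs) auto
  have "ev \<beta> (PrimRec g h) (m # ys) (rec_nat (gf ys) (\<lambda>m r. hf (m # r # ys)) m)"
  proof (induction m)
    case 0 then show ?case using g ly by (auto intro: ev.intros)
  next
    case (Suc m) then show ?case using h ly by (auto intro: ev.intros)
  qed
  then show "ev \<beta> (PrimRec g h) xs (rec_nat (gf (tl xs)) (\<lambda>m r. hf (m # r # tl xs)) (hd xs))"
    using xs by simp
qed

lemma comp_Mu: "comp f (Suc k) ff \<Longrightarrow> (\<And>xs. length xs = k \<Longrightarrow> \<exists>n. ff (n # xs) = 0) \<Longrightarrow>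
  comp (Mu f) k (\<lambda>xs. LEAST n. ff (n # xs) = 0)"
  unfolding comp_def
proof (intro allI impI)
  fix \<beta> :: "nat \<Rightarrow> nat" and xs :: "nat list" assume f: "\<forall>\<beta> xs. length xs = Suc k \<longrightarrow> ev \<beta> f xs (ff xs)"
    and ex: "\<And>xs. length xs = k \<Longrightarrow> \<exists>n. ff (n # xs) = 0" and l: "length xs = k"
  let ?n = "LEAST n. ff (n # xs) = 0"
  have "ff (?n # xs) = 0" using ex[OF l] by (rule LeastI_ex)
  moreover have "\<forall>m<?n. ff (m # xs) > 0" using not_less_Least by blast
  moreover have "\<And>m. ev \<beta> f (m # xs) (ff (m # xs))" using f l by simp
  ultimately show "ev \<beta> (Mu f) xs ?n"
    by (intro ev_Mu) (metis, blast)
qed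


lemma comp_Succ': "0 < k \<Longrightarrow> comp Succ k (\<lambda>xs. Suc (xs ! 0))"
  using comp_Succ[of "k - 1"] by simp

lemma comp_Comp': "list_all2 (\<lambda>g gf. comp g k gf) gs gfs \<Longrightarrow> comp f (length gs) fn \<Longrightarrow>
   (\<And>xs. length xs = k \<Longrightarrow> F xs = fn (map (\<lambda>gf. gf xs) gfs)) \<Longrightarrow> comp (Comp f gs) k F"
  using comp_Comp[of f gs fn k gfs] unfolding comp_def by auto

lemma comp_PrimRec': "0 < K \<Longrightarrow> comp g (K - 1) gf \<Longrightarrow> comp h (K + 1) hf \<Longrightarrow>
  (\<And>xs. length xs = K \<Longrightarrow> F xs = rec_nat (gf (tl xs)) (\<lambda>m r. hf (m # r # tl xs)) (xs ! 0)) \<Longrightarrow>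
  comp (PrimRec g h) K F"
proof -
  assume a: "0 < K" "comp g (K - 1) gf" "comp h (K + 1) hf"
    "(\<And>xs. length xs = K \<Longrightarrow> F xs = rec_nat (gf (tl xs)) (\<lambda>m r. hf (m # r # tl xs)) (xs ! 0))"
  have c: "comp (PrimRec g h) (Suc (K - 1)) (\<lambda>xs. rec_nat (gf (tl xs)) (\<lambda>m r. hf (m # r # tl xs)) (hd xs))"
    using comp_PrimRec[of g "K - 1" gf h hf] a by simp
  show ?thesis unfolding comp_def
  proof (intro allI impI)
    fix \<beta> :: "nat \<Rightarrow> nat" and xs :: "nat list" assume l: "length xs = K"
    then have "xs \<noteq> []" using a by auto
    then show "ev \<beta> (PrimRec g h) xs (F xs)" using compD[OF c, of xs \<beta>] a(1) a(4)[OF l] l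
      by (simp add: hd_conv_nth)
  qed
qed

lemma comp_Mu': "comp f (Suc k) ff \<Longrightarrow> (\<And>xs. length xs = k \<Longrightarrow> \<exists>n. ff (n # xs) = 0) \<Longrightarrow>
  (\<And>xs. length xs = k \<Longrightarrow> F xs = (LEAST n. ff (n # xs) = 0)) \<Longrightarrow> comp (Mu f) k F"
  using comp_Mu[of f k ff] unfolding comp_def by auto

lemmas comp_rules = comp_Comp' comp_PrimRec' comp_Zero comp_Succ' comp_Proj list_all2_Cons[THEN iffD2, OF conjI] list.rel_intros(1)

definition "ONE = Comp Succ [Zero]"
lemma comp_ONE: "comp ONE k (\<lambda>_. 1)"
  unfolding ONE_def by (rule comp_rules | simp)+

definition "ADD = PrimRec (Proj 0) (Comp Succ [Proj 1])"
lemma rec_add: "rec_nat (b::nat) (\<lambda>m r. Suc r) a = a + b" by (induction a) auto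
lemma comp_ADD: "k = 2 \<Longrightarrow> comp ADD k (\<lambda>xs. xs ! 0 + xs ! 1)"
  unfolding ADD_def apply (rule comp_rules | simp)+
  apply (simp add: rec_add nth_tl)
  done

definition "PRED = PrimRec Zero (Proj 0)"
lemma comp_PRED: "k = 1 \<Longrightarrow> comp PRED k (\<lambda>xs. xs ! 0 - 1)"
  unfolding PRED_def apply (rule comp_rules | simp)+
  apply (case_tac "xs ! 0") apply simp_all
  done

definition "SUBR = PrimRec (Proj 0) (Comp PRED [Proj 1])"
lemma rec_sub: "rec_nat (b::nat) (\<lambda>m r. r - Suc 0) a = b - a" by (induction a) auto
lemma comp_SUBR: "k = 2 \<Longrightarrow> comp SUBR k (\<lambda>xs. xs ! 1 - xs ! 0)"
  unfolding SUBR_def apply (rule comp_rules comp_PRED | simp)+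
  apply (simp add: rec_sub nth_tl)
  done

definition "MONUS = Comp SUBR [Proj 1, Proj 0]"
lemma comp_MONUS: "k = 2 \<Longrightarrow> comp MONUS k (\<lambda>xs. xs ! 0 - xs ! 1)"
  unfolding MONUS_def by (rule comp_rules comp_SUBR | simp)+

definition "MULT = PrimRec Zero (Comp ADD [Proj 1, Proj 2])"
lemma rec_mult: "rec_nat 0 (\<lambda>m r. r + (b::nat)) a = a * b" by (induction a) auto
lemma comp_MULT: "k = 2 \<Longrightarrow> comp MULT k (\<lambda>xs. xs ! 0 * xs ! 1)"
  unfolding MULT_def apply (rule comp_rules comp_ADD | simp)+
  apply (simp add: rec_mult nth_tl)
  done

definition "SG = PrimRec Zero ONE"
lemma comp_SG: "k = 1 \<Longrightarrow> comp SG k (\<lambda>xs. if xs ! 0 = 0 then 0 else 1)"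
  unfolding SG_def apply (rule comp_rules comp_ONE | simp)+
  apply (case_tac "xs ! 0") apply simp_all
  done

definition "NSG = PrimRec ONE Zero"
lemma comp_NSG: "k = 1 \<Longrightarrow> comp NSG k (\<lambda>xs. if xs ! 0 = 0 then 1 else 0)"
  unfolding NSG_def apply (rule comp_rules comp_ONE | simp)+
  apply (case_tac "xs ! 0") apply simp_all
  done

definition "EQN = Comp NSG [Comp ADD [MONUS, Comp MONUS [Proj 1, Proj 0]]]"
lemma comp_EQN: "k = 2 \<Longrightarrow> comp EQN k (\<lambda>xs. if xs ! 0 = xs ! 1 then 1 else 0)"
  unfolding EQN_def by (rule comp_rules comp_NSG comp_ADD comp_MONUS | simp)+

definition "COND = Comp ADD [Comp MULT [Comp NSG [Proj 0], Proj 1], Comp MULT [Comp SG [Proj 0], Proj 2]]"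
lemma comp_COND: "k = 3 \<Longrightarrow> comp COND k (\<lambda>xs. if xs ! 0 = 0 then xs ! 1 else xs ! 2)"
  unfolding COND_def by (rule comp_rules comp_NSG comp_SG comp_ADD comp_MULT | simp)+

definition "TRI = PrimRec Zero (Comp ADD [Proj 1, Comp Succ [Proj 0]])"
lemma rec_tri: "rec_nat 0 (\<lambda>m r. Suc (r + m)) a = triangle a" by (induction a) auto
lemma comp_TRI: "k = 1 \<Longrightarrow> comp TRI k (\<lambda>xs. triangle (xs ! 0))"
  unfolding TRI_def apply (rule comp_rules comp_ADD | simp)+
  apply (simp add: rec_tri)
  done

definition "PE = Comp ADD [Comp TRI [ADD], Proj 0]"
lemma comp_PE: "k = 2 \<Longrightarrow> comp PE k (\<lambda>xs. prod_encode (xs ! 0, xs ! 1))"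
  unfolding PE_def by (rule comp_rules comp_TRI comp_ADD | simp add: prod_encode_def)+

definition pdm :: "nat \<Rightarrow> nat" where "pdm x = (LEAST m. x < triangle (Suc m))"

lemma triangle_ge: "m \<le> triangle m"
  by (induction m) auto

lemma prod_decode_pdm: "prod_decode x = (x - triangle (pdm x), pdm x - (x - triangle (pdm x)))"
proof -
  let ?m = "pdm x"
  have ex: "x < triangle (Suc x)" using triangle_ge[of x] by simp
  have lt: "x < triangle (Suc ?m)" unfolding pdm_def by (rule LeastI[of _ x]) (rule ex)
  have ge: "triangle ?m \<le> x"
  proof (cases ?m)
    case 0 then show ?thesis by simp
  next
    case (Suc k)
    then have "\<not> x < triangle (Suc k)" using not_less_Least[of k "\<lambda>m. x < triangle (Suc m)"]
      unfolding pdm_def by simp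
    then show ?thesis using Suc by simp
  qed
  let ?a = "x - triangle ?m"
  have "?a \<le> ?m" using lt ge by simp
  then have "prod_encode (?a, ?m - ?a) = x" using ge by (simp add: prod_encode_def)
  then show ?thesis by (metis prod_encode_inverse)
qed

definition "PDM = Mu (Comp MONUS [Comp Succ [Proj 1], Comp TRI [Comp Succ [Proj 0]]])"
lemma comp_PDM: "k = 1 \<Longrightarrow> comp PDM k (\<lambda>xs. pdm (xs ! 0))"
  unfolding PDM_def
  apply (rule comp_Mu')
    apply (rule comp_rules comp_TRI comp_MONUS | simp)+
   apply (rule_tac x="xs ! 0" in exI)
   apply (simp add: triangle_ge le_imp_less_Suc)
  using triangle_ge
  apply (simp add: pdm_def less_Suc_eq_le)
  done

definition "FST = Comp MONUS [Proj 0, Comp TRI [PDM]]"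
lemma comp_FST: "k = 1 \<Longrightarrow> comp FST k (\<lambda>xs. fst (prod_decode (xs ! 0)))"
  unfolding FST_def by (rule comp_rules comp_TRI comp_MONUS comp_PDM | simp add: prod_decode_pdm)+

definition "SND = Comp MONUS [PDM, FST]"
lemma comp_SND: "k = 1 \<Longrightarrow> comp SND k (\<lambda>xs. snd (prod_decode (xs ! 0)))"
  unfolding SND_def by (rule comp_rules comp_FST comp_MONUS comp_PDM | simp add: prod_decode_pdm)+



lemma comp_cong: "comp F k f \<Longrightarrow> (\<And>xs. length xs = k \<Longrightarrow> f xs = g xs) \<Longrightarrow> comp F k g"
  unfolding comp_def by auto

definition enc :: "nat option \<Rightarrow> nat" where "enc = case_option 0 Suc"

lemma enc_simps[simp]: "enc None = 0" "enc (Some y) = Suc y" by (simp_all add: enc_def)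

lemma map_nth_drop: "length zs = K \<Longrightarrow> a \<le> K \<Longrightarrow> map (\<lambda>i. zs ! i) [a..<K] = drop a zs"
  by (rule nth_equalityI) auto

lemma comp_Projs: "b \<le> K \<Longrightarrow> list_all2 (\<lambda>g gf. comp g K gf) (map Proj [a..<b]) (map (\<lambda>i xs. xs ! i) [a..<b])"
  by (auto simp: list_all2_conv_all_nth intro: comp_Proj)

definition PRODL :: "recf list \<Rightarrow> recf" where "PRODL Gs = foldr (\<lambda>G acc. Comp MULT [G, acc]) Gs ONE"

lemma comp_PRODL: "list_all2 (\<lambda>G gf. comp G K gf) Gs gfs \<Longrightarrow> comp (PRODL Gs) K (\<lambda>zs. prod_list (map (\<lambda>gf. gf zs) gfs))"
proof (induction rule: list_all2_induct)
  case Nil then show ?case using comp_ONE[of K] by (simp add: PRODL_def)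
next
  case (Cons G Gs gf gfs)
  have e: "PRODL (G # Gs) = Comp MULT [G, PRODL Gs]" by (simp add: PRODL_def)
  show ?case unfolding e
    apply (rule comp_Comp'[where gfs="[gf, \<lambda>zs. prod_list (map (\<lambda>gf. gf zs) gfs)]"])
      apply (simp add: Cons.hyps Cons.IH)
     apply (rule comp_MULT, simp)
    apply simp
    done
qed

lemma ex_list_all2: "(\<forall>x\<in>set xs. \<exists>y. P x y) \<Longrightarrow> \<exists>ys. list_all2 P xs ys"
proof (induction xs)
  case Nil then show ?case by simp
next
  case (Cons x xs)
  then obtain y ys where "P x y" "list_all2 P xs ys" by auto
  then show ?case by blast
qed

lemma list_all2_2: "P a x \<Longrightarrow> P b y \<Longrightarrow> list_all2 P [a, b] [x, y]" by simp
lemma list_all2_1: "P a x \<Longrightarrow> list_all2 P [a] [x]" by simp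

abbreviation crun :: "recf \<Rightarrow> nat list \<Rightarrow> nat" where
  "crun f zs \<equiv> enc (run (chi (zs ! 1)) (zs ! 0) f (drop 2 zs))"

lemma drop2: "length zs = Suc (Suc (Suc k)) \<Longrightarrow> drop 2 zs = zs ! 2 # drop 3 zs"
  by (cases zs; cases "tl zs"; cases "tl (tl zs)") (auto simp: numeral_3_eq_3 numeral_2_eq_2)

lemma rec_enc: "rec_nat (enc A) (\<lambda>j r. (if r = 0 then 0 else 1) * enc (H j (r - 1))) m =
  enc (rec_nat A (\<lambda>j r. case r of None \<Rightarrow> None | Some y \<Rightarrow> H j y) m)"
  by (induction m) (auto split: option.splits)

lemma comp_PRED_Proj: "i < K \<Longrightarrow> comp (Comp PRED [Proj i]) K (\<lambda>ws. ws ! i - 1)"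
  by (rule comp_rules comp_PRED | simp)+

lemma comp_SG_Proj: "i < K \<Longrightarrow> comp (Comp SG [Proj i]) K (\<lambda>ws. if ws ! i = 0 then 0 else 1)"
  by (rule comp_rules comp_SG | simp)+

lemma rec_nat_cong2: "a = b \<Longrightarrow> n = n' \<Longrightarrow> (\<And>m r. f m r = g m r) \<Longrightarrow> rec_nat a f n = rec_nat b g n'"
proof -
  assume "a = b" "n = n'" "\<And>m r. f m r = g m r"
  moreover then have "f = g" by (intro ext) auto
  ultimately show ?thesis by simp
qed

lemma rec_mst: "rec_nat 0 (\<lambda>s c. if c = 0 then (if enc (F (s # xs)) = 0 then 1 else if enc (F (s # xs)) - 1 = 0 then s + 2 else 0) else c) n = mst F xs n"
  by (induction n) (auto split: option.splits)

lemma enc_mst: "enc (if 2 \<le> c then Some (c - 2) else None) = c - 1"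
  by auto

lemma compile: "\<exists>F. comp F (k + 2) (crun f)"
proof (induction f arbitrary: k)
  case Zero
  show ?case by (rule exI[of _ ONE], rule comp_cong[OF comp_ONE]) simp
next
  case Succ
  show ?case
  proof (cases k)
    case 0
    show ?thesis by (rule exI[of _ Zero], rule comp_cong[OF comp_Zero]) (simp add: 0)
  next
    case (Suc k')
    have "comp (Comp Succ [Comp Succ [Proj 2]]) (k + 2) (\<lambda>zs. Suc (Suc (zs ! 2)))"
      by (rule comp_rules | simp add: Suc)+
    then show ?thesis
      by (intro exI, rule comp_cong) (auto simp: Suc drop2)
  qed
next
  case (Proj i)
  show ?case
  proof (cases "i < k")
    case True
    have "comp (Comp Succ [Proj (i + 2)]) (k + 2) (\<lambda>zs. Suc (zs ! (i + 2)))"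
      by (rule comp_rules | simp add: True)+
    then show ?thesis
      by (intro exI, rule comp_cong) (auto simp: True add.commute)
  next
    case False
    show ?thesis by (rule exI[of _ Zero], rule comp_cong[OF comp_Zero]) (simp add: False)
  qed
next
  case Orc
  show ?case
  proof (cases k)
    case 0
    show ?thesis by (rule exI[of _ Zero], rule comp_cong[OF comp_Zero]) (simp add: 0)
  next
    case (Suc k')
    have "comp (Comp Succ [Comp EQN [Proj 2, Proj 1]]) (k + 2) (\<lambda>zs. Suc (if zs ! 2 = zs ! 1 then 1 else 0))"
      by (rule comp_rules comp_EQN | simp add: Suc)+
    then show ?thesis
      by (intro exI, rule comp_cong) (auto simp: Suc drop2 chi_def)
  qed
next
  case (Comp f gs)
  obtain Ff where Ff: "comp Ff (length gs + 2) (crun f)" using Comp.IH(1) by blast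
  obtain Gs where Gs0: "list_all2 (\<lambda>g G. comp G (k + 2) (crun g)) gs Gs"
    using ex_list_all2[of gs "\<lambda>g G. comp G (k + 2) (crun g)"] Comp.IH(2) by blast
  have Gs: "list_all2 (\<lambda>G gf. comp G (k + 2) gf) Gs (map crun gs)"
    using Gs0 by (auto simp: list_all2_conv_all_nth)
  have P: "comp (Comp SG [PRODL Gs]) (k + 2) (\<lambda>zs. if prod_list (map (\<lambda>g. crun g zs) gs) = 0 then 0 else 1)"
    apply (rule comp_Comp'[where gfs="[\<lambda>zs. prod_list (map (\<lambda>g. crun g zs) gs)]"])
      apply (simp only: list.rel_intros list_all2_Cons)
      apply (rule conjI[OF comp_cong[OF comp_PRODL[OF Gs]] TrueI])
      apply (simp add: o_def)
     apply (rule comp_SG, simp)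
    apply simp
    done
  have L: "list_all2 (\<lambda>g gf. comp g (k + 2) gf) ([Proj 0, Proj 1] @ map (\<lambda>G. Comp PRED [G]) Gs)
     ([\<lambda>zs. zs ! 0, \<lambda>zs. zs ! 1] @ map (\<lambda>g zs. crun g zs - 1) gs)"
  proof -
    have "list_all2 (\<lambda>g gf. comp g (k + 2) gf) (map (\<lambda>G. Comp PRED [G]) Gs) (map (\<lambda>g zs. crun g zs - 1) gs)"
      unfolding list_all2_conv_all_nth
    proof (intro conjI allI impI)
      show "length (map (\<lambda>G. Comp PRED [G]) Gs) = length (map (\<lambda>g zs. crun g zs - 1) gs)"
        using Gs by (simp add: list_all2_lengthD)
      fix j assume j: "j < length (map (\<lambda>G. Comp PRED [G]) Gs)"
      have c: "comp (Gs ! j) (Suc (Suc k)) (crun (gs ! j))" using Gs j by (auto simp: list_all2_conv_all_nth)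
      have l: "length gs = length Gs" using Gs by (simp add: list_all2_lengthD)
      show "comp (map (\<lambda>G. Comp PRED [G]) Gs ! j) (k + 2) (map (\<lambda>g zs. crun g zs - 1) gs ! j)"
        using j l apply simp
        apply (rule comp_Comp'[where gfs="[crun (gs ! j)]"])
          using c apply simp
         apply (rule comp_PRED, simp)
        apply simp
        done
    qed
    then show ?thesis by (simp add: comp_Proj)
  qed
  have l: "length gs = length Gs" using Gs by (simp add: list_all2_lengthD)
  have Ff': "comp Ff (length ([Proj 0, Proj 1] @ map (\<lambda>G. Comp PRED [G]) Gs)) (crun f)"
    using Ff l by simp
  have Q: "comp (Comp Ff ([Proj 0, Proj 1] @ map (\<lambda>G. Comp PRED [G]) Gs)) (k + 2)
     (\<lambda>zs. crun f (zs ! 0 # zs ! 1 # map (\<lambda>g. crun g zs - 1) gs))"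
    apply (rule comp_Comp'[OF L])
     apply (rule Ff')
    apply (simp only: map_append list.map map_map o_def)
    apply (simp add: numeral_2_eq_2)
    done
  have R: "comp (Comp MULT [Comp SG [PRODL Gs], Comp Ff ([Proj 0, Proj 1] @ map (\<lambda>G. Comp PRED [G]) Gs)]) (k + 2)
     (\<lambda>zs. (if prod_list (map (\<lambda>g. crun g zs) gs) = 0 then 0 else 1) * crun f (zs ! 0 # zs ! 1 # map (\<lambda>g. crun g zs - 1) gs))"
    apply (rule comp_Comp')
      apply (rule list_all2_2, rule P, rule Q)
     apply (rule comp_MULT, simp)
    apply simp
    done
  show ?case
  proof (rule exI, rule comp_cong[OF R])
    fix zs :: "nat list" assume lz: "length zs = k + 2"
    let ?a = "chi (zs ! 1)" and ?t = "zs ! 0" and ?xs = "drop 2 zs"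
    show "(if prod_list (map (\<lambda>g. crun g zs) gs) = 0 then 0 else 1) * crun f (zs ! 0 # zs ! 1 # map (\<lambda>g. crun g zs - 1) gs)
        = crun (Comp f gs) zs"
    proof (cases "None \<in> set (map (\<lambda>g. run ?a ?t g ?xs) gs)")
      case True
      then obtain g where "g \<in> set gs" "run ?a ?t g ?xs = None" by auto
      then have "prod_list (map (\<lambda>g. crun g zs) gs) = 0" by (force simp: prod_list_zero_iff)
      then show ?thesis using True by (simp add: Let_def o_def)
    next
      case False
      then have nn: "\<forall>g\<in>set gs. run ?a ?t g ?xs \<noteq> None" by force
      then have "\<forall>g\<in>set gs. crun g zs \<noteq> 0" by (force simp: enc_def split: option.splits)
      then have "prod_list (map (\<lambda>g. crun g zs) gs) \<noteq> 0" by (auto simp: prod_list_zero_iff)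
      moreover have m: "map (\<lambda>g. crun g zs - 1) gs = map (\<lambda>g. the (run ?a ?t g ?xs)) gs"
        using nn by (auto simp: enc_def split: option.splits)
      ultimately show ?thesis using False by (subst m) (simp add: Let_def o_def)
    qed
  qed
next
  case (PrimRec g h)
  show ?case
  proof (cases k)
    case 0
    show ?thesis by (rule exI[of _ Zero], rule comp_cong[OF comp_Zero]) (simp add: 0)
  next
    case (Suc k')
    obtain Fg where Fg: "comp Fg (k' + 2) (crun g)" using PrimRec.IH(1) by blast
    obtain Fh where Fh: "comp Fh ((k' + 2) + 2) (crun h)" using PrimRec.IH(2) by blast
    let ?Sargs = "[Proj 2, Proj 3, Proj 0, Comp PRED [Proj 1]] @ map Proj [4..<k'+4]"
    let ?Sfs = "[\<lambda>ws. ws ! 2, \<lambda>ws. ws ! 3, \<lambda>ws. ws ! 0, \<lambda>ws. ws ! 1 - 1] @ map (\<lambda>i ws. ws ! i) [4..<k'+4]"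
    have LS: "list_all2 (\<lambda>g gf. comp g (k' + 4) gf) ?Sargs ?Sfs"
      by (rule list_all2_appendI) (auto intro!: comp_Projs comp_Proj comp_PRED_Proj[of 1, simplified])
    have S1: "comp (Comp Fh ?Sargs) (k' + 4) (\<lambda>ws. crun h (ws ! 2 # ws ! 3 # ws ! 0 # (ws ! 1 - 1) # drop 4 ws))"
    proof (rule comp_Comp'[OF LS])
      show "comp Fh (length ?Sargs) (crun h)" using Fh by (simp add: add.commute)
      fix ws :: "nat list" assume "length ws = k' + 4"
      then show "crun h (ws ! 2 # ws ! 3 # ws ! 0 # (ws ! 1 - 1) # drop 4 ws) = crun h (map (\<lambda>gf. gf ws) ?Sfs)"
        by (simp add: map_nth_drop[symmetric] o_def)
    qed
    have S: "comp (Comp MULT [Comp SG [Proj 1], Comp Fh ?Sargs]) (k' + 4)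
       (\<lambda>ws. (if ws ! 1 = 0 then 0 else 1) * crun h (ws ! 2 # ws ! 3 # ws ! 0 # (ws ! 1 - 1) # drop 4 ws))"
      apply (rule comp_Comp')
        apply (rule list_all2_2)
         apply (rule comp_SG_Proj, simp)
        apply (rule S1)
       apply (rule comp_MULT, simp)
      apply simp
      done
    have P: "comp (PrimRec Fg (Comp MULT [Comp SG [Proj 1], Comp Fh ?Sargs])) (k' + 3)
       (\<lambda>vs. rec_nat (crun g (tl vs)) (\<lambda>m r. (if r = 0 then 0 else 1) * crun h (vs ! 1 # vs ! 2 # m # (r - 1) # drop 3 vs)) (vs ! 0))"
    proof (rule comp_PrimRec')
      show "comp Fg (k' + 3 - 1) (crun g)" using Fg by simp
      show "comp (Comp MULT [Comp SG [Proj 1], Comp Fh ?Sargs]) (k' + 3 + 1)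
       (\<lambda>ws. (if ws ! 1 = 0 then 0 else 1) * crun h (ws ! 2 # ws ! 3 # ws ! 0 # (ws ! 1 - 1) # drop 4 ws))"
        using S by (simp add: add.commute)
      fix vs :: "nat list" assume "length vs = k' + 3"
      then show "rec_nat (crun g (tl vs)) (\<lambda>m r. (if r = 0 then 0 else 1) * crun h (vs ! 1 # vs ! 2 # m # (r - 1) # drop 3 vs)) (vs ! 0)
        = rec_nat (crun g (tl vs)) (\<lambda>m r. (if (m # r # tl vs) ! 1 = 0 then 0 else 1) *
          crun h ((m # r # tl vs) ! 2 # (m # r # tl vs) ! 3 # (m # r # tl vs) ! 0 # ((m # r # tl vs) ! 1 - 1) # drop 4 (m # r # tl vs))) (vs ! 0)"
        by (cases vs; cases "tl vs"; cases "tl (tl vs)") (auto simp: numeral_3_eq_3 numeral_2_eq_2 eval_nat_numeral)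
    qed simp
    let ?Fargs = "[Proj 2, Proj 0, Proj 1] @ map Proj [3..<k'+3]"
    let ?Ffs = "[\<lambda>zs. zs ! 2, \<lambda>zs. zs ! 0, \<lambda>zs. zs ! 1] @ map (\<lambda>i zs. zs ! i) [3..<k'+3]"
    have LF: "list_all2 (\<lambda>g gf. comp g (k + 2) gf) ?Fargs ?Ffs"
      by (rule list_all2_appendI) (auto simp: Suc intro!: comp_Projs comp_Proj)
    have lF: "length ?Fargs = k' + 3" by simp
    have F: "comp (Comp (PrimRec Fg (Comp MULT [Comp SG [Proj 1], Comp Fh ?Sargs])) ?Fargs) (k + 2)
       (\<lambda>zs. rec_nat (crun g (zs ! 0 # zs ! 1 # drop 3 zs)) (\<lambda>m r. (if r = 0 then 0 else 1) * crun h (zs ! 0 # zs ! 1 # m # (r - 1) # drop 3 zs)) (zs ! 2))"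
    proof (rule comp_Comp'[OF LF])
      show "comp (PrimRec Fg (Comp MULT [Comp SG [Proj 1], Comp Fh ?Sargs])) (length ?Fargs)
       (\<lambda>vs. rec_nat (crun g (tl vs)) (\<lambda>m r. (if r = 0 then 0 else 1) * crun h (vs ! 1 # vs ! 2 # m # (r - 1) # drop 3 vs)) (vs ! 0))"
        unfolding lF by (rule P)
      fix zs :: "nat list" assume l: "length zs = k + 2"
      have "map (\<lambda>i. zs ! i) [3..<k'+3] = drop 3 zs" using l Suc by (intro map_nth_drop) auto
      then show "rec_nat (crun g (zs ! 0 # zs ! 1 # drop 3 zs)) (\<lambda>m r. (if r = 0 then 0 else 1) * crun h (zs ! 0 # zs ! 1 # m # (r - 1) # drop 3 zs)) (zs ! 2)
        = rec_nat (crun g (tl (map (\<lambda>gf. gf zs) ?Ffs))) (\<lambda>m r. (if r = 0 then 0 else 1) * crun h ((map (\<lambda>gf. gf zs) ?Ffs) ! 1 # (map (\<lambda>gf. gf zs) ?Ffs) ! 2 # m # (r - 1) # drop 3 (map (\<lambda>gf. gf zs) ?Ffs))) ((map (\<lambda>gf. gf zs) ?Ffs) ! 0)"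
        by (simp add: o_def)
    qed
    show ?thesis
    proof (rule exI, rule comp_cong[OF F])
      fix zs :: "nat list" assume l: "length zs = k + 2"
      have d: "drop 2 zs = zs ! 2 # drop 3 zs" using l Suc drop2 by simp
      show "rec_nat (crun g (zs ! 0 # zs ! 1 # drop 3 zs)) (\<lambda>m r. (if r = 0 then 0 else 1) * crun h (zs ! 0 # zs ! 1 # m # (r - 1) # drop 3 zs)) (zs ! 2)
        = crun (PrimRec g h) zs"
        using rec_enc[of "run (chi (zs ! Suc 0)) (zs ! 0) g (drop 3 zs)" "\<lambda>j y. run (chi (zs ! Suc 0)) (zs ! 0) h (j # y # drop 3 zs)" "zs ! 2"]
        by (simp add: d[unfolded numeral_2_eq_2] numeral_2_eq_2)
    qed
  qed
next
  case (Mu f)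
  obtain Ff where Ff: "comp Ff ((k + 1) + 2) (crun f)" using Mu.IH by blast
  let ?Rargs = "[Proj 2, Proj 3, Proj 0] @ map Proj [4..<k+4]"
  let ?Rfs = "[\<lambda>ws. ws ! 2, \<lambda>ws. ws ! 3, \<lambda>ws. ws ! 0] @ map (\<lambda>i ws. ws ! i) [4..<k+4]"
  let ?R = "Comp Ff ?Rargs"
  let ?Rf = "\<lambda>ws. crun f (ws ! 2 # ws ! 3 # ws ! 0 # drop 4 ws)"
  have LR: "list_all2 (\<lambda>g gf. comp g (k + 4) gf) ?Rargs ?Rfs"
    by (rule list_all2_appendI) (auto intro!: comp_Projs comp_Proj)
  have lR: "length ?Rargs = k + 1 + 2" by simp
  have R: "comp ?R (k + 4) ?Rf"
  proof (rule comp_Comp'[OF LR])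
    show "comp Ff (length ?Rargs) (crun f)" unfolding lR by (rule Ff)
    fix ws :: "nat list" assume "length ws = k + 4"
    then show "?Rf ws = crun f (map (\<lambda>gf. gf ws) ?Rfs)"
      by (simp add: map_nth_drop[symmetric] o_def)
  qed
  let ?TWO = "Comp Succ [ONE]"
  have TWO: "comp ?TWO K (\<lambda>_. 2)" for K
    by (rule comp_rules comp_ONE | simp)+
  let ?INNER = "Comp COND [?R, ONE, Comp COND [Comp PRED [?R], Comp ADD [Proj 0, ?TWO], Zero]]"
  have I2: "comp (Comp COND [Comp PRED [?R], Comp ADD [Proj 0, ?TWO], Zero]) (k + 4)
     (\<lambda>ws. if ?Rf ws - 1 = 0 then ws ! 0 + 2 else 0)"
    apply (rule comp_Comp'[where gfs="[\<lambda>ws. ?Rf ws - 1, \<lambda>ws. ws ! 0 + 2, \<lambda>_. 0]"])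
      apply (simp only: list_all2_Cons list.rel_intros(1) simp_thms)
      apply (intro conjI)
        apply (rule comp_Comp'[where gfs="[?Rf]"], rule list_all2_1, rule R, rule comp_PRED, simp, simp)
       apply (rule comp_Comp'[where gfs="[\<lambda>ws. ws ! 0, \<lambda>_. 2]"], rule list_all2_2, rule comp_Proj, simp, rule TWO, rule comp_ADD, simp, simp)
      apply (rule comp_Zero)
     apply (rule comp_COND, simp)
    apply simp
    done
  have I: "comp ?INNER (k + 4) (\<lambda>ws. if ?Rf ws = 0 then 1 else if ?Rf ws - 1 = 0 then ws ! 0 + 2 else 0)"
    apply (rule comp_Comp'[where gfs="[?Rf, \<lambda>_. 1, \<lambda>ws. if ?Rf ws - 1 = 0 then ws ! 0 + 2 else 0]"])
      apply (simp only: list_all2_Cons list.rel_intros(1) simp_thms)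
      apply (intro conjI R comp_ONE I2)
     apply (rule comp_COND, simp)
    apply simp
    done
  let ?S2 = "Comp COND [Proj 1, ?INNER, Proj 1]"
  let ?S2f = "\<lambda>ws. if ws ! 1 = 0 then (if ?Rf ws = 0 then 1 else if ?Rf ws - 1 = 0 then ws ! 0 + 2 else 0) else ws ! 1"
  have S2: "comp ?S2 (k + 4) ?S2f"
    apply (rule comp_Comp'[where gfs="[\<lambda>ws. ws ! 1, \<lambda>ws. if ?Rf ws = 0 then 1 else if ?Rf ws - 1 = 0 then ws ! 0 + 2 else 0, \<lambda>ws. ws ! 1]"])
      apply (simp only: list_all2_Cons list.rel_intros(1) simp_thms)
      apply (intro conjI I comp_Proj; simp)
     apply (rule comp_COND, simp)
    apply simp
    done
  let ?St = "PrimRec Zero ?S2"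
  let ?Stf = "\<lambda>vs. rec_nat 0 (\<lambda>s c. ?S2f (s # c # tl vs)) (vs ! 0)"
  have St: "comp ?St (k + 3) ?Stf"
  proof (rule comp_PrimRec')
    show "comp ?S2 (k + 3 + 1) ?S2f" using S2 by (simp add: add.commute)
  qed (auto intro: comp_Zero)
  let ?Fargs = "[Proj 0, Proj 0, Proj 1] @ map Proj [2..<k+2]"
  let ?Ffs = "[\<lambda>zs. zs ! 0, \<lambda>zs. zs ! 0, \<lambda>zs. zs ! 1] @ map (\<lambda>i zs. zs ! i) [2..<k+2]"
  have LF: "list_all2 (\<lambda>g gf. comp g (k + 2) gf) ?Fargs ?Ffs"
    apply (rule list_all2_appendI)
     apply (simp add: comp_Proj)
    apply (rule comp_Projs)
    apply simp
    done
  have lF: "length ?Fargs = k + 3" by (simp; arith)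
  have F1: "comp (Comp ?St ?Fargs) (k + 2) (\<lambda>zs. ?Stf (zs ! 0 # zs ! 0 # zs ! 1 # drop 2 zs))"
  proof (rule comp_Comp'[OF LF])
    show "comp ?St (length ?Fargs) ?Stf" unfolding lF by (rule St)
    fix zs :: "nat list" assume l: "length zs = k + 2"
    have "map (\<lambda>gf. gf zs) ?Ffs = zs ! 0 # zs ! 0 # zs ! 1 # drop 2 zs"
      using map_nth_drop[OF l, of 2] by (simp add: o_def)
    then show "?Stf (zs ! 0 # zs ! 0 # zs ! 1 # drop 2 zs) = ?Stf (map (\<lambda>gf. gf zs) ?Ffs)"
      by (simp only:)
  qed
  have F: "comp (Comp PRED [Comp ?St ?Fargs]) (k + 2) (\<lambda>zs. ?Stf (zs ! 0 # zs ! 0 # zs ! 1 # drop 2 zs) - 1)"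
    by (rule comp_Comp'[where gfs="[_]"], rule list_all2_1, rule F1, rule comp_PRED, simp, simp)
  show ?case
  proof (rule exI, rule comp_cong[OF F])
    fix zs :: "nat list" assume l: "length zs = k + 2"
    let ?G = "run (chi (zs ! 1)) (zs ! 0) f"
    have e: "?S2f (s # c # tl (zs ! 0 # zs ! 0 # zs ! 1 # drop 2 zs)) = (if c = 0 then (if enc (?G (s # drop 2 zs)) = 0 then 1
       else if enc (?G (s # drop 2 zs)) - 1 = 0 then s + 2 else 0) else c)" for s c
      by (simp add: numeral_2_eq_2 eval_nat_numeral)
    have "?Stf (zs ! 0 # zs ! 0 # zs ! 1 # drop 2 zs) = mst ?G (drop 2 zs) (zs ! 0)"
      unfolding rec_mst[symmetric]
      by (rule rec_nat_cong2) (simp_all add: numeral_2_eq_2 eval_nat_numeral)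
    then show "?Stf (zs ! 0 # zs ! 0 # zs ! 1 # drop 2 zs) - 1 = crun (Mu f) zs"
      by (simp add: Let_def enc_mst)
  qed
qed



lemma ce_preimage:
  assumes A: "ce A" and H: "comp H 1 (\<lambda>xs. h (xs ! 0))"
  shows "ce {x. h x \<in> A}"
proof -
  obtain e where e: "A = {x. \<exists>y. ev (\<lambda>_. 0) e [x] y}" using A unfolding ce_def by blast
  have "ev (\<lambda>_. 0) (Comp e [H]) [x] y \<longleftrightarrow> ev (\<lambda>_. 0) e [h x] y" for x y
  proof
    assume "ev (\<lambda>_. 0) (Comp e [H]) [x] y"
    then obtain ys where ys: "list_all2 (\<lambda>g y. ev (\<lambda>_. 0) g [x] y) [H] ys" "ev (\<lambda>_. 0) e ys y"
      by (rule evCompE) auto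
    then obtain y0 where "ys = [y0]" "ev (\<lambda>_. 0) H [x] y0" by (cases ys) auto
    moreover then have "y0 = h x" using comp_ev_iff[OF H, of "[x]"] by simp
    ultimately show "ev (\<lambda>_. 0) e [h x] y" using ys by simp
  next
    assume "ev (\<lambda>_. 0) e [h x] y"
    moreover have "list_all2 (\<lambda>g y. ev (\<lambda>_. 0) g [x] y) [H] [h x]"
      using compD[OF H, of "[x]"] by simp
    ultimately show "ev (\<lambda>_. 0) (Comp e [H]) [x] y" by (intro ev_Comp)
  qed
  then have "{x. h x \<in> A} = {x. \<exists>y. ev (\<lambda>_. 0) (Comp e [H]) [x] y}" using e by auto
  then show ?thesis unfolding ce_def by blast
qed

lemma comp_len1: "comp P 1 f \<Longrightarrow> comp P (length [x]) f" by simp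

lemma ce_decidable:
  assumes P: "comp P 1 (\<lambda>xs. p (xs ! 0))"
  shows "ce {x. p x = 0}"
proof -
  have f: "comp (Comp P [Proj 1]) 2 (\<lambda>xs. p (xs ! 1))"
    apply (rule comp_Comp'[where gfs="[\<lambda>xs. xs ! 1]"])
      apply (rule list_all2_1, rule comp_Proj, simp)
     apply (rule comp_len1[OF P])
    apply simp
    done
  have "(\<exists>y. ev (\<lambda>_. 0) (Mu (Comp P [Proj 1])) [x] y) \<longleftrightarrow> p x = 0" for x
  proof
    assume "\<exists>y. ev (\<lambda>_. 0) (Mu (Comp P [Proj 1])) [x] y"
    then obtain y where "ev (\<lambda>_. 0) (Mu (Comp P [Proj 1])) [x] y" by blast
    then have "ev (\<lambda>_. 0) (Comp P [Proj 1]) [y, x] 0" by (rule evMuE) simp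
    then show "p x = 0" using comp_ev_iff[OF f, of "[y, x]"] by simp
  next
    assume "p x = 0"
    then have "ev (\<lambda>_. 0) (Comp P [Proj 1]) [0, x] 0" using compD[OF f, of "[0, x]"] by simp
    then show "\<exists>y. ev (\<lambda>_. 0) (Mu (Comp P [Proj 1])) [x] y" by (auto intro: ev_Mu)
  qed
  then show ?thesis unfolding ce_def by (intro exI[of _ "Mu (Comp P [Proj 1])"]) auto
qed

primrec constn :: "nat \<Rightarrow> recf" where
  "constn 0 = Zero" | "constn (Suc n) = Comp Succ [constn n]"

lemma comp_constn: "comp (constn a) k (\<lambda>_. a)"
proof (induction a)
  case 0 then show ?case by (simp add: comp_Zero)
next
  case (Suc a)
  show ?case
    apply simp
    apply (rule comp_Comp'[where gfs="[\<lambda>_. a]"])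
      apply (rule list_all2_1, rule Suc)
     apply (rule comp_Succ', simp)
    apply simp
    done
qed

definition "HREL G = Comp PE [Comp G [FST], SND]"

lemma comp_HREL: "comp G 1 (\<lambda>xs. g (xs ! 0)) \<Longrightarrow>
  comp (HREL G) 1 (\<lambda>xs. prod_encode (g (fst (prod_decode (xs ! 0))), snd (prod_decode (xs ! 0))))"
  unfolding HREL_def
  apply (rule comp_Comp'[where gfs="[\<lambda>xs. g (fst (prod_decode (xs ! 0))), \<lambda>xs. snd (prod_decode (xs ! 0))]"])
    apply (rule list_all2_2)
     apply (rule comp_Comp'[where gfs="[\<lambda>xs. fst (prod_decode (xs ! 0))]"], rule list_all2_1, rule comp_FST, simp, simp, simp)
    apply (rule comp_SND, simp)
   apply (rule comp_PE, simp)
  apply simp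
  done

lemma MLtest_relabel:
  assumes U: "MLtest U" and G: "comp G 1 (\<lambda>xs. g (xs ! 0))" and ge: "\<And>j. j \<le> g j"
  shows "MLtest (\<lambda>j. U (g j))"
  unfolding MLtest_def
proof (intro conjI allI)
  show "cantor_open (U (g i))" for i using U unfolding MLtest_def by blast
  show "emeasure cantor_lambda (U (g i)) \<le> ennreal ((1 / 2) ^ i)" for i
  proof -
    have "emeasure cantor_lambda (U (g i)) \<le> ennreal ((1 / 2) ^ g i)" using U unfolding MLtest_def by blast
    also have "\<dots> \<le> ennreal ((1 / 2) ^ i)" using ge[of i] by (intro ennreal_leI power_decreasing) auto
    finally show ?thesis .
  qed
  let ?C = "{prod_encode (i, str_code \<sigma>) | i \<sigma>. cyl \<sigma> \<subseteq> U i}"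
  let ?h = "\<lambda>x. prod_encode (g (fst (prod_decode x)), snd (prod_decode x))"
  have ceC: "ce ?C" using U unfolding MLtest_def by blast
  have "{prod_encode (i, str_code \<sigma>) | i \<sigma>. cyl \<sigma> \<subseteq> U (g i)} = {x. ?h x \<in> ?C}"
  proof (intro set_eqI iffI)
    fix x assume "x \<in> {prod_encode (i, str_code \<sigma>) | i \<sigma>. cyl \<sigma> \<subseteq> U (g i)}"
    then show "x \<in> {x. ?h x \<in> ?C}" by auto
  next
    fix x assume "x \<in> {x. ?h x \<in> ?C}"
    then obtain i \<sigma> where e: "?h x = prod_encode (i, str_code \<sigma>)" "cyl \<sigma> \<subseteq> U i" by auto
    then have "i = g (fst (prod_decode x))" "snd (prod_decode x) = str_code \<sigma>" by auto
    moreover have "x = prod_encode (fst (prod_decode x), snd (prod_decode x))" by simp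
    ultimately show "x \<in> {prod_encode (i, str_code \<sigma>) | i \<sigma>. cyl \<sigma> \<subseteq> U (g i)}"
      using e(2) by (intro CollectI exI[of _ "fst (prod_decode x)"] exI[of _ \<sigma>]) auto
  qed
  then show "ce {prod_encode (i, str_code \<sigma>) | i \<sigma>. cyl \<sigma> \<subseteq> U (g i)}"
    using ce_preimage[OF ceC comp_HREL[OF G]] by simp
qed



lemma comp_C1: "comp f 1 fn \<Longrightarrow> comp a K fa \<Longrightarrow> (\<And>xs. length xs = K \<Longrightarrow> F xs = fn [fa xs]) \<Longrightarrow> comp (Comp f [a]) K F"
  by (rule comp_Comp'[where gfs="[fa]"]) auto
lemma comp_C2: "comp f 2 fn \<Longrightarrow> comp a K fa \<Longrightarrow> comp b K fb \<Longrightarrow> (\<And>xs. length xs = K \<Longrightarrow> F xs = fn [fa xs, fb xs]) \<Longrightarrow> comp (Comp f [a, b]) K F"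
  by (rule comp_Comp'[where gfs="[fa, fb]"]) (auto simp: numeral_2_eq_2)
lemma comp_C3: "comp f 3 fn \<Longrightarrow> comp a K fa \<Longrightarrow> comp b K fb \<Longrightarrow> comp c K fc \<Longrightarrow> (\<And>xs. length xs = K \<Longrightarrow> F xs = fn [fa xs, fb xs, fc xs]) \<Longrightarrow> comp (Comp f [a, b, c]) K F"
  by (rule comp_Comp'[where gfs="[fa, fb, fc]"]) (auto simp: numeral_3_eq_3)

lemma search_fn:
  assumes inf: "\<And>j. \<exists>n\<ge>j. ev (chi n) \<Psi> [a] 1"
  shows "\<exists>G g. comp G 1 (\<lambda>xs. g (xs ! 0)) \<and> (\<forall>j. j \<le> g j \<and> ev (chi (g j)) \<Psi> [a] 1)"
proof -
  obtain FP where FP0: "comp FP (1 + 2) (crun \<Psi>)" using compile by blast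
  have FP: "comp FP 3 (crun \<Psi>)" using FP0 by (simp add: numeral_3_eq_3)
  let ?cr = "\<lambda>c. enc (run (chi (fst (prod_decode c))) (snd (prod_decode c)) \<Psi> [a])"
  let ?q = "\<lambda>c j. (j - fst (prod_decode c)) + ((?cr c - 2) + (2 - ?cr c))"
  let ?A = "Comp FP [Comp SND [Proj 0], Comp FST [Proj 0], constn a]"
  have A: "comp ?A 2 (\<lambda>xs. ?cr (xs ! 0))"
    apply (rule comp_C3[OF FP])
       apply (rule comp_C1[OF comp_SND], simp, rule comp_Proj, simp, simp)
      apply (rule comp_C1[OF comp_FST], simp, rule comp_Proj, simp, simp)
     apply (rule comp_constn)
    apply (simp add: numeral_2_eq_2)
    done
  let ?Q = "Comp ADD [Comp MONUS [Proj 1, Comp FST [Proj 0]], Comp ADD [Comp MONUS [?A, constn 2], Comp MONUS [constn 2, ?A]]]"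
  have Q: "comp ?Q 2 (\<lambda>xs. ?q (xs ! 0) (xs ! 1))"
    apply (rule comp_C2[OF comp_ADD], simp)
      apply (rule comp_C2[OF comp_MONUS], simp, rule comp_Proj, simp)
        apply (rule comp_C1[OF comp_FST], simp, rule comp_Proj, simp, simp, simp)
     apply (rule comp_C2[OF comp_ADD], simp)
       apply (rule comp_C2[OF comp_MONUS], simp, rule A, rule comp_constn, simp)
      apply (rule comp_C2[OF comp_MONUS], simp, rule comp_constn, rule A, simp)
     apply simp
    apply simp
    done
  have ex: "\<exists>c. ?q c j = 0" for j
  proof -
    obtain n where n: "j \<le> n" "ev (chi n) \<Psi> [a] 1" using inf by blast
    then obtain t where "run (chi n) t \<Psi> [a] = Some 1" using run_complete by blast
    then show ?thesis using n(1) by (intro exI[of _ "prod_encode (n, t)"]) simp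
  qed
  have M: "comp (Mu ?Q) 1 (\<lambda>xs. LEAST c. ?q c (xs ! 0) = 0)"
  proof (rule comp_Mu')
    show "comp ?Q (Suc 1) (\<lambda>xs. ?q (xs ! 0) (xs ! 1))" using Q by (simp add: numeral_2_eq_2)
    show "\<And>xs. length xs = 1 \<Longrightarrow> \<exists>n. ?q ((n # xs) ! 0) ((n # xs) ! 1) = 0" using ex by simp
  qed simp
  let ?g = "\<lambda>j. fst (prod_decode (LEAST c. ?q c j = 0))"
  have G: "comp (Comp FST [Mu ?Q]) 1 (\<lambda>xs. ?g (xs ! 0))"
    by (rule comp_C1[OF comp_FST], simp, rule M, simp)
  have P: "j \<le> ?g j \<and> ev (chi (?g j)) \<Psi> [a] 1" for j
  proof -
    define c0 where "c0 = (LEAST c. ?q c j = 0)"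
    have "?q c0 j = 0" unfolding c0_def by (rule LeastI_ex, rule ex)
    then have a1: "j \<le> fst (prod_decode c0)" and a2: "?cr c0 = 2" by auto
    from a2 have "run (chi (fst (prod_decode c0))) (snd (prod_decode c0)) \<Psi> [a] = Some 1"
      by (auto simp: enc_def split: option.splits)
    then have "ev (chi (fst (prod_decode c0))) \<Psi> [a] 1" by (rule run_sound)
    then show ?thesis using a1 unfolding c0_def by simp
  qed
  show ?thesis by (rule exI[of _ "Comp FST [Mu ?Q]"], rule exI[of _ ?g]) (use G P in blast)
qed



abbreviation "BM \<equiv> (\<lambda>_::nat. measure_pmf (bernoulli_pmf (1/2)))"

lemma pps: "product_prob_space BM"
  unfolding product_prob_space_def product_prob_space_axioms_def product_sigma_finite_def
  by (auto intro: prob_space_measure_pmf prob_space_imp_sigma_finite)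

lemma space_cl: "space cantor_lambda = UNIV"
  unfolding cantor_lambda_def by (simp add: space_PiM PiE_UNIV_domain)

lemma prob_cl: "prob_space cantor_lambda"
  unfolding cantor_lambda_def by (rule prob_space_PiM) (rule prob_space_measure_pmf)

lemma cyl_emb: "cyl \<sigma> = prod_emb UNIV BM {..<length \<sigma>} (Pi\<^sub>E {..<length \<sigma>} (\<lambda>i. {\<sigma> ! i}))"
proof -
  have "x \<in> cyl \<sigma> \<longleftrightarrow> x \<in> prod_emb UNIV BM {..<length \<sigma>} (Pi\<^sub>E {..<length \<sigma>} (\<lambda>i. {\<sigma> ! i}))" for x
    unfolding cyl_def prod_emb_iff by (simp add: PiE_iff Ball_def)
  then show ?thesis by blast
qed

lemma cyl_sets: "cyl \<sigma> \<in> sets cantor_lambda"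
  unfolding cyl_emb cantor_lambda_def by (rule sets_PiM_I) simp_all

lemma cyl_measure: "emeasure cantor_lambda (cyl \<sigma>) = ennreal ((1/2) ^ length \<sigma>)"
proof -
  have "emeasure cantor_lambda (cyl \<sigma>) = (\<Prod>i\<in>{..<length \<sigma>}. emeasure (BM i) {\<sigma> ! i})"
    unfolding cyl_emb cantor_lambda_def by (rule product_prob_space.emeasure_PiM_emb[OF pps]) simp_all
  also have "\<dots> = (\<Prod>i\<in>{..<length \<sigma>}. ennreal (1/2))"
    by (intro prod.cong refl) (simp add: emeasure_pmf_single)
  also have "\<dots> = ennreal (1/2) ^ length \<sigma>" by simp
  also have "\<dots> = ennreal ((1/2) ^ length \<sigma>)" by (rule ennreal_power) simp
  finally show ?thesis .
qed

lemma open_sets: assumes "cantor_open V" shows "V \<in> sets cantor_lambda"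
proof -
  have "V = (\<Union>\<sigma>\<in>{\<sigma>. cyl \<sigma> \<subseteq> V}. cyl \<sigma>)" using assms unfolding cantor_open_def by blast
  also have "\<dots> \<in> sets cantor_lambda"
    by (rule sets.countable_UN'') (simp_all add: cyl_sets)
  finally show ?thesis .
qed



definition tlc :: "nat \<Rightarrow> nat" where "tlc s = snd (prod_decode (s - 1))"
definition hdc :: "nat \<Rightarrow> nat" where "hdc s = fst (prod_decode (s - 1))"
definition tlk :: "nat \<Rightarrow> nat \<Rightarrow> nat" where "tlk s k = (tlc ^^ k) s"

lemma list_decode_eq: "list_decode s = (if s = 0 then [] else hdc s # list_decode (tlc s))"
  by (cases s) (auto simp: hdc_def tlc_def split: prod.splits)

lemma ld_nth: "(k < length (list_decode s) \<longleftrightarrow> tlk s k \<noteq> 0) \<and>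
   (k < length (list_decode s) \<longrightarrow> list_decode s ! k = hdc (tlk s k))"
proof (induction k arbitrary: s)
  case 0
  show ?case
  proof (cases "s = 0")
    case True then show ?thesis by (simp add: tlk_def)
  next
    case False
    then have "list_decode s = hdc s # list_decode (tlc s)" by (subst list_decode_eq) simp
    then show ?thesis using False by (simp add: tlk_def)
  qed
next
  case (Suc k)
  have t: "tlk s (Suc k) = tlk (tlc s) k" unfolding tlk_def funpow_Suc_right by simp
  show ?case
  proof (cases "s = 0")
    case True
    have "tlk 0 k = 0" for k by (induction k) (auto simp: tlk_def tlc_def prod_decode_def prod_decode_aux.simps)
    then show ?thesis using True by simp
  next
    case False
    then have "list_decode s = hdc s # list_decode (tlc s)" by (subst list_decode_eq) simp
    then show ?thesis using Suc[of "tlc s"] t by simp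
  qed
qed

lemma snd_prod_decode_le: "snd (prod_decode n) \<le> n"
  by (metis le_prod_encode_2 prod_decode_inverse prod.collapse)

lemma length_list_decode: "length (list_decode s) \<le> s"
proof (induction s rule: list_decode.induct)
  case 1 then show ?case by simp
next
  case (2 n)
  obtain x y where p: "prod_decode n = (x, y)" by fastforce
  then have "y \<le> n" using snd_prod_decode_le[of n] by simp
  then show ?case using 2[OF p[symmetric]] p by simp
qed

lemma cyl_subset_iff: "cyl \<sigma> \<subseteq> cyl \<tau> \<longleftrightarrow> length \<tau> \<le> length \<sigma> \<and> (\<forall>j<length \<tau>. \<sigma> ! j = \<tau> ! j)"
proof
  assume s: "cyl \<sigma> \<subseteq> cyl \<tau>"
  define X where "X = (\<lambda>j. if j < length \<sigma> then \<sigma> ! j else (if j < length \<tau> then \<not> \<tau> ! j else False))"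
  have "X \<in> cyl \<sigma>" unfolding cyl_def X_def by simp
  then have X: "\<forall>j<length \<tau>. X j = \<tau> ! j" using s unfolding cyl_def by blast
  have "length \<tau> \<le> length \<sigma>"
  proof (rule ccontr)
    assume "\<not> ?thesis"
    then show False using X[rule_format, of "length \<sigma>"] unfolding X_def by simp
  qed
  moreover have "\<forall>j<length \<tau>. \<sigma> ! j = \<tau> ! j" using X calculation unfolding X_def by auto
  ultimately show "length \<tau> \<le> length \<sigma> \<and> (\<forall>j<length \<tau>. \<sigma> ! j = \<tau> ! j)" by blast
next
  assume "length \<tau> \<le> length \<sigma> \<and> (\<forall>j<length \<tau>. \<sigma> ! j = \<tau> ! j)"
  then show "cyl \<sigma> \<subseteq> cyl \<tau>" unfolding cyl_def by auto
qed

definition good :: "nat \<Rightarrow> bool" where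
  "good x = (let i = fst (prod_decode x); L = list_decode (snd (prod_decode x)) in
     (\<forall>v\<in>set L. v \<le> 1) \<and> i \<le> length L \<and> (\<forall>j<i. L ! j = 0))"

lemma CT_good: "{prod_encode (i, str_code \<sigma>) | i \<sigma>. cyl \<sigma> \<subseteq> cyl (replicate i False)} = {x. good x}"
proof (intro set_eqI iffI)
  fix x assume "x \<in> {prod_encode (i, str_code \<sigma>) | i \<sigma>. cyl \<sigma> \<subseteq> cyl (replicate i False)}"
  then obtain i \<sigma> where x: "x = prod_encode (i, str_code \<sigma>)" and c: "cyl \<sigma> \<subseteq> cyl (replicate i False)" by blast
  then show "x \<in> {x. good x}" unfolding good_def str_code_def cyl_subset_iff by auto
next
  fix x assume "x \<in> {x. good x}"
  then have g: "good x" by simp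
  define i where "i = fst (prod_decode x)"
  define L where "L = list_decode (snd (prod_decode x))"
  have L: "\<forall>v\<in>set L. v \<le> 1" "i \<le> length L" "\<forall>j<i. L ! j = 0" using g unfolding good_def i_def L_def Let_def by auto
  define \<sigma> where "\<sigma> = map (\<lambda>v. v = 1) L"
  have "map of_bool \<sigma> = L" unfolding \<sigma>_def using L(1) by (induction L) auto
  then have sc: "str_code \<sigma> = snd (prod_decode x)" unfolding str_code_def L_def by simp
  have "x = prod_encode (i, str_code \<sigma>)" unfolding sc i_def by simp
  moreover have "cyl \<sigma> \<subseteq> cyl (replicate i False)" unfolding cyl_subset_iff \<sigma>_def using L(2,3) by auto
  ultimately show "x \<in> {prod_encode (i, str_code \<sigma>) | i \<sigma>. cyl \<sigma> \<subseteq> cyl (replicate i False)}" by blast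
qed


definition "TLC = Comp SND [Comp PRED [Proj 0]]"
lemma comp_TLC: "comp TLC 1 (\<lambda>xs. tlc (xs ! 0))"
  unfolding TLC_def
  by (rule comp_C1[OF comp_SND], simp, rule comp_C1[OF comp_PRED], simp, rule comp_Proj, simp, simp, simp add: tlc_def)

definition "HDC = Comp FST [Comp PRED [Proj 0]]"
lemma comp_HDC: "comp HDC 1 (\<lambda>xs. hdc (xs ! 0))"
  unfolding HDC_def
  by (rule comp_C1[OF comp_FST], simp, rule comp_C1[OF comp_PRED], simp, rule comp_Proj, simp, simp, simp add: hdc_def)

lemma rec_tlk: "rec_nat s (\<lambda>m r. tlc r) k = tlk s k"
  by (induction k) (simp_all add: tlk_def)

definition "TLKR = PrimRec (Proj 0) (Comp TLC [Proj 1])"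
lemma comp_TLKR: "comp TLKR 2 (\<lambda>xs. tlk (xs ! 1) (xs ! 0))"
  unfolding TLKR_def
proof (rule comp_PrimRec')
  show "comp (Proj 0) (2 - 1) (\<lambda>xs. xs ! 0)" by (rule comp_Proj) simp
  show "comp (Comp TLC [Proj 1]) (2 + 1) (\<lambda>xs. tlc (xs ! 1))"
    by (rule comp_C1[OF comp_TLC], rule comp_Proj, simp, simp)
  fix xs :: "nat list" assume "length xs = 2"
  then show "tlk (xs ! 1) (xs ! 0) = rec_nat (tl xs ! 0) (\<lambda>m r. tlc ((m # r # tl xs) ! 1)) (xs ! 0)"
    by (cases xs; cases "tl xs") (auto simp: rec_tlk)
qed simp

abbreviation "TT \<equiv> Comp TLKR [Proj 0, Proj 1]"
lemma comp_TT: "comp TT 3 (\<lambda>xs. tlk (xs ! 1) (xs ! 0))"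
  by (rule comp_C2[OF comp_TLKR], rule comp_Proj, simp, rule comp_Proj, simp, simp)

definition "B1 = Comp MULT [Comp SG [TT], Comp SG [Comp MONUS [Comp HDC [TT], ONE]]]"
definition "b1 s k = (if tlk s k = 0 then 0 else 1) * (if hdc (tlk s k) - 1 = 0 then 0 else (1::nat))"
lemma comp_B1: "comp B1 3 (\<lambda>xs. b1 (xs ! 1) (xs ! 0))"
  unfolding B1_def b1_def
  apply (rule comp_C2[OF comp_MULT], simp)
    apply (rule comp_C1[OF comp_SG], simp, rule comp_TT, simp)
   apply (rule comp_C1[OF comp_SG], simp)
    apply (rule comp_C2[OF comp_MONUS], simp)
      apply (rule comp_C1[OF comp_HDC], rule comp_TT, simp)
     apply (rule comp_ONE)
    apply simp
   apply simp
  apply simp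
  done

definition "B2 = Comp ADD [Comp NSG [TT], Comp SG [Comp HDC [TT]]]"
definition "b2 s k = (if tlk s k = 0 then 1 else 0) + (if hdc (tlk s k) = 0 then 0 else (1::nat))"
lemma comp_B2: "comp B2 3 (\<lambda>xs. b2 (xs ! 1) (xs ! 0))"
  unfolding B2_def b2_def
  apply (rule comp_C2[OF comp_ADD], simp)
    apply (rule comp_C1[OF comp_NSG], simp, rule comp_TT, simp)
   apply (rule comp_C1[OF comp_SG], simp)
    apply (rule comp_C1[OF comp_HDC], rule comp_TT, simp)
   apply simp
  apply simp
  done

definition "SUMR B = PrimRec Zero (Comp ADD [Proj 1, Comp B [Proj 0, Proj 2, Proj 3]])"
lemma rec_sum: "rec_nat 0 (\<lambda>k r. r + b k) n = (\<Sum>k<n. b k :: nat)"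
  by (induction n) auto
lemma comp_SUMR: "comp B 3 (\<lambda>xs. b (xs ! 1) (xs ! 0)) \<Longrightarrow> comp (SUMR B) 3 (\<lambda>xs. \<Sum>k<xs ! 0. b (xs ! 1) k)"
  unfolding SUMR_def
proof (rule comp_PrimRec')
  assume B: "comp B 3 (\<lambda>xs. b (xs ! 1) (xs ! 0))"
  show "comp (Comp ADD [Proj 1, Comp B [Proj 0, Proj 2, Proj 3]]) (3 + 1) (\<lambda>xs. xs ! 1 + b (xs ! 2) (xs ! 0))"
    apply (rule comp_C2[OF comp_ADD], simp, rule comp_Proj, simp)
     apply (rule comp_C3[OF B], (rule comp_Proj, simp)+, simp)
    apply simp
    done
  fix xs :: "nat list" assume "length xs = 3"
  then show "(\<Sum>k<xs ! 0. b (xs ! 1) k) = rec_nat (0::nat) (\<lambda>m r. (m # r # tl xs) ! 1 + b ((m # r # tl xs) ! 2) ((m # r # tl xs) ! 0)) (xs ! 0)"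
    by (cases xs; cases "tl xs") (auto simp: rec_sum[symmetric] add.commute)
qed (auto intro: comp_Zero)

definition "PG = Comp ADD [Comp (SUMR B1) [SND, SND, FST], Comp (SUMR B2) [FST, SND, FST]]"
definition "pgood x = (\<Sum>k<snd (prod_decode x). b1 (snd (prod_decode x)) k) + (\<Sum>k<fst (prod_decode x). b2 (snd (prod_decode x)) k)"
lemma comp_PG: "comp PG 1 (\<lambda>xs. pgood (xs ! 0))"
  unfolding PG_def pgood_def
  apply (rule comp_C2[OF comp_ADD], simp)
    apply (rule comp_C3[OF comp_SUMR[OF comp_B1]], (rule comp_SND comp_FST, simp)+, simp)
   apply (rule comp_C3[OF comp_SUMR[OF comp_B2]], (rule comp_SND comp_FST, simp)+, simp)
  apply simp
  done

lemma good_pgood: "good x \<longleftrightarrow> pgood x = 0"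
proof -
  define s where "s = snd (prod_decode x)"
  define i where "i = fst (prod_decode x)"
  define L where "L = list_decode s"
  have ls: "length L \<le> s" unfolding L_def by (rule length_list_decode)
  have nth: "\<And>k. (k < length L \<longleftrightarrow> tlk s k \<noteq> 0)" "\<And>k. k < length L \<Longrightarrow> L ! k = hdc (tlk s k)"
    unfolding L_def using ld_nth[of _ s] by simp_all
  have A: "(\<Sum>k<s. b1 s k) = 0 \<longleftrightarrow> (\<forall>v\<in>set L. v \<le> 1)"
  proof -
    have "(\<Sum>k<s. b1 s k) = 0 \<longleftrightarrow> (\<forall>k<s. b1 s k = 0)" by auto
    also have "\<dots> \<longleftrightarrow> (\<forall>k<length L. L ! k \<le> 1)"
    proof
      assume H: "\<forall>k<s. b1 s k = 0"
      show "\<forall>k<length L. L ! k \<le> 1"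
      proof (intro allI impI)
        fix k assume k: "k < length L"
        then have "k < s" using ls by simp
        then have "b1 s k = 0" using H by blast
        moreover have "tlk s k \<noteq> 0" using nth(1) k by blast
        ultimately have "hdc (tlk s k) \<le> 1" unfolding b1_def by (simp split: if_splits)
        then show "L ! k \<le> 1" using nth(2)[OF k] by simp
      qed
    next
      assume H: "\<forall>k<length L. L ! k \<le> 1"
      show "\<forall>k<s. b1 s k = 0"
      proof (intro allI impI)
        fix k assume "k < s"
        show "b1 s k = 0"
        proof (cases "tlk s k = 0")
          case True then show ?thesis unfolding b1_def by simp
        next
          case False
          then have k: "k < length L" using nth(1) by blast
          then have "hdc (tlk s k) \<le> 1" using H nth(2)[OF k] by (metis One_nat_def)
          then show ?thesis unfolding b1_def by simp
        qed
      qed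
    qed
    also have "\<dots> \<longleftrightarrow> (\<forall>v\<in>set L. v \<le> 1)" unfolding all_set_conv_all_nth by simp
    finally show ?thesis .
  qed
  have B: "(\<Sum>k<i. b2 s k) = 0 \<longleftrightarrow> i \<le> length L \<and> (\<forall>j<i. L ! j = 0)"
  proof -
    have "(\<Sum>k<i. b2 s k) = 0 \<longleftrightarrow> (\<forall>k<i. b2 s k = 0)" by auto
    also have "\<dots> \<longleftrightarrow> (\<forall>k<i. k < length L \<and> L ! k = 0)"
    proof -
      have "b2 s k = 0 \<longleftrightarrow> k < length L \<and> L ! k = 0" for k
      proof (cases "tlk s k = 0")
        case True then show ?thesis using nth(1)[of k] unfolding b2_def by simp
      next
        case False
        then have k: "k < length L" using nth(1)[of k] by simp
        show ?thesis using nth(2)[OF k] k False unfolding b2_def by simp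
      qed
      then show ?thesis by simp
    qed
    also have "\<dots> \<longleftrightarrow> i \<le> length L \<and> (\<forall>j<i. L ! j = 0)"
    proof
      assume H: "\<forall>k<i. k < length L \<and> L ! k = 0"
      have "i \<le> length L"
      proof (rule ccontr)
        assume "\<not> i \<le> length L"
        then have "length L < i" by simp
        with H show False by blast
      qed
      then show "i \<le> length L \<and> (\<forall>j<i. L ! j = 0)" using H by blast
    next
      assume "i \<le> length L \<and> (\<forall>j<i. L ! j = 0)"
      then show "\<forall>k<i. k < length L \<and> L ! k = 0" by auto
    qed
    finally show ?thesis .
  qed
  have "good x \<longleftrightarrow> (\<forall>v\<in>set L. v \<le> 1) \<and> i \<le> length L \<and> (\<forall>j<i. L ! j = 0)"
    unfolding good_def Let_def s_def i_def L_def by (rule refl)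
  moreover have "pgood x = (\<Sum>k<s. b1 s k) + (\<Sum>k<i. b2 s k)" unfolding pgood_def s_def i_def by (rule refl)
  ultimately show ?thesis using A B by simp
qed

lemma ce_T: "ce {prod_encode (i, str_code \<sigma>) | i \<sigma>. cyl \<sigma> \<subseteq> cyl (replicate i False)}"
  unfolding CT_good good_pgood using ce_decidable[OF comp_PG] .



lemma MLR_iff: assumes "universal_MLtest U" shows "X \<in> MLR \<longleftrightarrow> (\<exists>i. X \<notin> U i)"
proof
  assume "X \<in> MLR"
  moreover have "MLtest U" using assms unfolding universal_MLtest_def by blast
  ultimately show "\<exists>i. X \<notin> U i" unfolding MLR_def by blast
next
  assume "\<exists>i. X \<notin> U i"
  then show "X \<in> MLR" using assms unfolding universal_MLtest_def MLR_def by blast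
qed

lemma MLtest_le: "MLtest U \<Longrightarrow> emeasure cantor_lambda (U i) \<le> ennreal ((1/2) ^ i)"
  unfolding MLtest_def by blast

lemma MLtest_sets: "MLtest U \<Longrightarrow> U i \<in> sets cantor_lambda"
  unfolding MLtest_def using open_sets by blast

lemma MLR_ex: assumes "universal_MLtest U" shows "\<exists>X. X \<in> MLR"
proof (rule ccontr)
  assume "\<not> ?thesis"
  then have "\<forall>X. X \<in> U 1" using MLR_iff[OF assms] by blast
  then have "U 1 = UNIV" by blast
  then have "emeasure cantor_lambda (U 1) = 1"
    using prob_space.emeasure_space_1[OF prob_cl] space_cl by simp
  moreover have "emeasure cantor_lambda (U 1) \<le> ennreal (1/2)"
    using MLtest_le[of U 1] assms unfolding universal_MLtest_def by simp
  ultimately show False by (simp add: ennreal_le_iff2 del: ennreal_half)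
qed

lemma LAY_inf:
  assumes U: "universal_MLtest U" and Y: "Y \<in> MLR"
  shows "\<exists>i\<ge>k. Y \<notin> U i"
proof (rule ccontr)
  assume "\<not> ?thesis"
  then have all: "\<forall>i\<ge>k. Y \<in> U i" by blast
  have G: "comp (Comp ADD [Proj 0, constn k]) 1 (\<lambda>xs. xs ! 0 + k)"
    by (rule comp_C2[OF comp_ADD], simp, rule comp_Proj, simp, rule comp_constn, simp)
  have W: "MLtest (\<lambda>j. U (j + k))"
    by (rule MLtest_relabel[OF _ G]) (use U in \<open>auto simp: universal_MLtest_def\<close>)
  have "Y \<in> (\<Inter>j. U (j + k))" using all by auto
  then show False using Y W unfolding MLR_def by blast
qed

lemma cyl_open: "cantor_open (cyl \<tau>)"
  unfolding cantor_open_def by blast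

lemma T_test: "MLtest (\<lambda>i. cyl (replicate i False))"
  unfolding MLtest_def
proof (intro conjI allI)
  show "cantor_open (cyl (replicate i False))" for i by (rule cyl_open)
  show "ce {prod_encode (i, str_code \<sigma>) | i \<sigma>. cyl \<sigma> \<subseteq> cyl (replicate i False)}" by (rule ce_T)
  show "emeasure cantor_lambda (cyl (replicate i False)) \<le> ennreal ((1/2) ^ i)" for i
    by (simp add: cyl_measure del: ennreal_half)
qed

lemma nonempty_V:
  assumes U: "universal_MLtest U" and V: "universal_MLtest V"
  shows "\<exists>X\<in>MLR. X \<in> V a"
proof -
  have "(\<lambda>_. False) \<in> (\<Inter>i. cyl (replicate i False))" by (auto simp: cyl_def)
  then have "(\<lambda>_. False) \<in> V a" using V T_test unfolding universal_MLtest_def by blast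
  moreover have "cantor_open (V a)" using V unfolding universal_MLtest_def MLtest_def by blast
  ultimately obtain \<sigma> where \<sigma>: "(\<lambda>_. False) \<in> cyl \<sigma>" "cyl \<sigma> \<subseteq> V a" unfolding cantor_open_def by blast
  show ?thesis
  proof (rule ccontr)
    assume "\<not> ?thesis"
    then have sub: "cyl \<sigma> \<subseteq> U i" for i using \<sigma>(2) MLR_iff[OF U] by blast
    have UT: "MLtest U" using U unfolding universal_MLtest_def by blast
    let ?i = "Suc (length \<sigma>)"
    have "ennreal ((1/2) ^ length \<sigma>) = emeasure cantor_lambda (cyl \<sigma>)" by (simp add: cyl_measure)
    also have "\<dots> \<le> emeasure cantor_lambda (U ?i)" by (rule emeasure_mono[OF sub MLtest_sets[OF UT]])
    also have "\<dots> \<le> ennreal ((1/2) ^ ?i)" by (rule MLtest_le[OF UT])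
    finally have le: "ennreal ((1/2) ^ length \<sigma>) \<le> ennreal ((1/2) ^ ?i)" .
    have z: "0 \<le> (1/2::real) ^ ?i" by simp
    have "(1/2::real) ^ length \<sigma> \<le> (1/2) ^ ?i" using ennreal_le_iff[OF z] le by blast
    moreover have "(1/2::real) ^ ?i < (1/2) ^ length \<sigma>" by (rule power_strict_decreasing) auto
    ultimately show False by linarith
  qed
qed



lemma delta_nat_chi: "delta_nat (chi n) = Some n"
proof -
  have "chi n = chi m \<Longrightarrow> m = n" for m by (metis chi_def one_neq_zero)
  then have "(THE m. chi n = chi m) = n" by blast
  then show ?thesis unfolding delta_nat_def by auto
qed

lemma delta_nat_SomeD: "delta_nat q = Some y \<Longrightarrow> q = chi y"
  unfolding delta_nat_def by (auto split: if_splits) (metis delta_nat_chi delta_nat_def option.inject)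

lemma delta_MLR_X: "X \<in> MLR \<Longrightarrow> delta_MLR (\<lambda>n. of_bool (X n)) = Some X"
  unfolding delta_MLR_def by auto

lemma delta_MLR_SomeD: "delta_MLR q = Some Y \<Longrightarrow> Y \<in> MLR"
  unfolding delta_MLR_def by (auto split: if_splits)

lemma tfun_ev: assumes "tfun \<Psi> p = Some r" shows "ev p \<Psi> [m] y \<longleftrightarrow> y = r m"
proof -
  have tot: "\<forall>n. \<exists>y. ev p \<Psi> [n] y" and r: "r = (\<lambda>n. THE y. ev p \<Psi> [n] y)"
    using assms unfolding tfun_def by (auto split: if_splits)
  obtain y0 where y0: "ev p \<Psi> [m] y0" using tot by blast
  have "(THE y. ev p \<Psi> [m] y) = y0" using y0 ev_det by blast
  then show ?thesis using y0 ev_det r by auto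
qed

theorem proposition5p5:
  assumes "universal_MLtest U" and "universal_MLtest V"
  shows "\<not> sW_le delta_MLR delta_nat (RD V) delta_MLR delta_nat (LAY U)"
proof
  assume "sW_le delta_MLR delta_nat (RD V) delta_MLR delta_nat (LAY U)"
  then obtain \<Phi> \<Psi> where H: "\<And>\<Gamma>. realizes delta_MLR delta_nat (LAY U) \<Gamma> \<Longrightarrow>
      realizes delta_MLR delta_nat (RD V) (\<lambda>p. Option.bind (tfun \<Phi> p) (\<lambda>q. Option.bind (\<Gamma> q) (tfun \<Psi>)))"
    unfolding sW_le_def by blast
  have U: "universal_MLtest U" and V: "universal_MLtest V" by fact+
  define rdV where "rdV X = (LEAST i. X \<notin> V i)" for X
  define \<Gamma>0 where "\<Gamma>0 q = (case delta_MLR q of Some Y \<Rightarrow> Some (chi (LEAST i. Y \<notin> U i)) | None \<Rightarrow> None)" for q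
  have LAYne: "Y \<in> MLR \<Longrightarrow> Y \<notin> U (LEAST i. Y \<notin> U i)" for Y
    using MLR_iff[OF U] by (metis LeastI_ex)
  have R0: "realizes delta_MLR delta_nat (LAY U) \<Gamma>0"
    unfolding realizes_def \<Gamma>0_def LAY_def
    using LAYne delta_MLR_SomeD delta_nat_chi by auto
  have K: "\<exists>Y\<in>MLR. \<forall>n. Y \<notin> U n \<longrightarrow> tfun \<Psi> (chi n) = Some (chi (rdV X))" if X: "X \<in> MLR" for X
  proof -
    let ?p = "\<lambda>n. of_bool (X n) :: nat"
    have dp: "delta_MLR ?p = Some X" by (rule delta_MLR_X[OF X])
    from H[OF R0] dp obtain q y where
      "Option.bind (tfun \<Phi> ?p) (\<lambda>q. Option.bind (\<Gamma>0 q) (tfun \<Psi>)) = Some q"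
      unfolding realizes_def by blast
    then obtain q0 r where q0: "tfun \<Phi> ?p = Some q0" and r: "\<Gamma>0 q0 = Some r"
      by (auto simp: bind_eq_Some_conv)
    then obtain Y where dY: "delta_MLR q0 = Some Y" unfolding \<Gamma>0_def by (auto split: option.splits)
    have YM: "Y \<in> MLR" by (rule delta_MLR_SomeD[OF dY])
    have "tfun \<Psi> (chi n) = Some (chi (rdV X))" if n: "Y \<notin> U n" for n
    proof -
      let ?\<Gamma> = "\<Gamma>0(q0 := Some (chi n))"
      have "realizes delta_MLR delta_nat (LAY U) ?\<Gamma>"
        using R0 n dY delta_nat_chi unfolding realizes_def LAY_def by auto
      from H[OF this] dp obtain q' y' where
        e: "Option.bind (tfun \<Phi> ?p) (\<lambda>q. Option.bind (?\<Gamma> q) (tfun \<Psi>)) = Some q'"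
        and d: "delta_nat q' = Some y'" and yin: "y' \<in> RD V X"
        unfolding realizes_def by blast
      have "tfun \<Psi> (chi n) = Some q'" using e q0 by simp
      moreover have "q' = chi y'" by (rule delta_nat_SomeD[OF d])
      moreover have "y' = rdV X" using yin unfolding RD_def rdV_def by simp
      ultimately show ?thesis by simp
    qed
    then show ?thesis using YM by blast
  qed
  obtain X0 where X0: "X0 \<in> MLR" using MLR_ex[OF U] by blast
  define a where "a = rdV X0"
  obtain Y0 where Y0: "Y0 \<in> MLR" "\<And>n. Y0 \<notin> U n \<Longrightarrow> tfun \<Psi> (chi n) = Some (chi a)"
    using K[OF X0] unfolding a_def by blast
  have inf: "\<exists>n\<ge>j. ev (chi n) \<Psi> [a] 1" for j
  proof -
    obtain n where n: "n \<ge> j" "Y0 \<notin> U n" using LAY_inf[OF U Y0(1)] by blast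
    have "ev (chi n) \<Psi> [a] (chi a a)" using tfun_ev[OF Y0(2)[OF n(2)]] by simp
    then show ?thesis using n(1) by (auto simp: chi_def)
  qed
  obtain G g where G: "comp G 1 (\<lambda>xs. g (xs ! 0))" and gp: "\<And>j. j \<le> g j" "\<And>j. ev (chi (g j)) \<Psi> [a] 1"
    using search_fn[OF inf] by blast
  have UT: "MLtest U" using U unfolding universal_MLtest_def by blast
  have W: "MLtest (\<lambda>j. U (g j))" by (rule MLtest_relabel[OF UT G gp(1)])
  have const: "rdV X = a" if X: "X \<in> MLR" for X
  proof (rule ccontr)
    assume ne: "rdV X \<noteq> a"
    obtain Y where Y: "Y \<in> MLR" "\<And>n. Y \<notin> U n \<Longrightarrow> tfun \<Psi> (chi n) = Some (chi (rdV X))"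
      using K[OF X] by blast
    have "Y \<in> U (g j)" for j
    proof (rule ccontr)
      assume "Y \<notin> U (g j)"
      then have "ev (chi (g j)) \<Psi> [a] (chi (rdV X) a)" using tfun_ev[OF Y(2)] by simp
      then have "chi (rdV X) a = 1" using gp(2)[of j] ev_det by blast
      then show False using ne by (simp add: chi_def split: if_splits)
    qed
    then have "Y \<in> (\<Inter>j. U (g j))" by blast
    then show False using Y(1) W unfolding MLR_def by blast
  qed
  obtain X where X: "X \<in> MLR" "X \<in> V a" using nonempty_V[OF U V] by blast
  have "\<exists>i. X \<notin> V i" using MLR_iff[OF V] X(1) by blast
  then have "X \<notin> V (rdV X)" unfolding rdV_def by (rule LeastI_ex)
  then show False using const[OF X(1)] X(2) by simp
qed


end
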